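(* Let $\mathcal P=\{\mathcal A+\lambda\mathcal B\}$ be a Poisson pencil on $M$ and let $\lambda(x)$ be a finite eigenvalue of $\mathcal P(x)$ depending on $x\in M$, which is real-valued $C^\infty$ in the real case and holomorphic in the complex case. Assume (1) $\operatorname{rk}\mathcal P(x)$ is constant on $M$, and (2) $\lambda(x)$ is an isolated eigenvalue. Then for every $x\in M$, $$(\mathcal A-\lambda(x)\mathcal B)\,d\lambda(x)=0,$$ i.e. $d\lambda(x)\in\operatorname{Ker}\mathcal A_{-\lambda(x)}(x)$.
   Context: $M$ is a real $C^\infty$ or complex analytic manifold; a Poisson pencil is $\mathcal P=\{\mathcal A_\lambda=\mathcal A+\lambda\mathcal B\}$ with $\mathcal A,\mathcal B$ compatible Poisson brackets. At $x$, $\mathcal P(x)$ is the linear pencil of skew forms on $T_x^*M$, $\operatorname{rk}\mathcal P(x)=\max_\lambda\operatorname{rk}\mathcal A_\lambda(x)$. A number $\lambda_0$ is an eigenvalue of $\mathcal P(x)$ if $\operatorname{rk}(\mathcal A-\lambda_0\mathcal B)(x)<\operatorname{rk}\mathcal P(x)$ (equivalently, a root of the characteristic polynomial). An eigenvalue $\lambda(x)$ is isolated if there is a neighbourhood $U\subset M\times\mathbb C$ of its graph $\{(x,\lambda(x)):x\in M\}$ containing no other eigenvalues, i.e. no point $(x,\mu)\in U$ with $\mu\neq\lambda(x)$ an eigenvalue of $\mathcal P(x)$. The bivector $\mathcal A-\lambda(x)\mathcal B$ at $x$ is viewed as a map $T^*_xM\to T_xM$. *)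

theory Defs
  imports "HOL-Analysis.Analysis"
begin

text \<open>Local coordinates: a (real or complex) manifold is modelled by an open subset of
  K^n, with K = real or complex; n is the finite index type 'n.  A bivector field
  is a matrix-valued function (its matrix in the coordinate basis); viewed as a map
  T*M -> TM it sends a covector with components c to the vector (sum_j P_ij c_j)_i.\<close>

text \<open>Partial derivative d/dx_l (resp. d/dz_l) of a scalar function at x.\<close>
definition pd :: "('a::real_normed_field^'n \<Rightarrow> 'a) \<Rightarrow> 'a^'n \<Rightarrow> 'n \<Rightarrow> 'a" where
  "pd f x l = frechet_derivative f (at x) (axis l 1)"

text \<open>Real C-infinity functions on an open set: all iterated partial derivatives exist
  (D ds is the iterated partial derivative along the list of directions ds).\<close>
definition smooth_on :: "(real^'n) set \<Rightarrow> (real^'n \<Rightarrow> real) \<Rightarrow> bool" where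
  "smooth_on U f \<longleftrightarrow>
     (\<exists>D :: 'n list \<Rightarrow> real^'n \<Rightarrow> real.
        (\<forall>x\<in>U. D [] x = f x) \<and>
        (\<forall>ds. \<forall>x\<in>U. (D ds has_derivative (\<lambda>v. \<Sum>i\<in>UNIV. v$i * D (i # ds) x)) (at x)))"

text \<open>Holomorphic functions of several complex variables on an open set:
  complex (Frechet) differentiable at every point.\<close>
definition holo_on :: "(complex^'n) set \<Rightarrow> (complex^'n \<Rightarrow> complex) \<Rightarrow> bool" where
  "holo_on U f \<longleftrightarrow>
     (\<forall>x\<in>U. \<exists>f'. (f has_derivative f') (at x) \<and> (\<forall>c v. f' (c *s v) = c * f' v))"

text \<open>Poisson bivector on U: skew-symmetric with vanishing Schouten bracket [P,P]
  (Jacobi identity in coordinates).\<close>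
definition poisson_on :: "('a::real_normed_field^'n) set \<Rightarrow> ('a^'n \<Rightarrow> 'a^'n^'n) \<Rightarrow> bool" where
  "poisson_on U P \<longleftrightarrow>
     (\<forall>x\<in>U. (\<forall>i j. P x $ i $ j = - P x $ j $ i) \<and>
       (\<forall>i j k. (\<Sum>l\<in>UNIV. P x $ i $ l * pd (\<lambda>y. P y $ j $ k) x l
                          + P x $ j $ l * pd (\<lambda>y. P y $ k $ i) x l
                          + P x $ k $ l * pd (\<lambda>y. P y $ i $ j) x l) = 0))"

text \<open>Compatible Poisson brackets: A, B and A + B are Poisson.\<close>
definition poisson_pencil_on :: "('a::real_normed_field^'n) set \<Rightarrow> ('a^'n \<Rightarrow> 'a^'n^'n) \<Rightarrow> ('a^'n \<Rightarrow> 'a^'n^'n) \<Rightarrow> bool" where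
  "poisson_pencil_on U A B \<longleftrightarrow> poisson_on U A \<and> poisson_on U B \<and> poisson_on U (\<lambda>x. A x + B x)"

text \<open>Complexification of a real matrix.\<close>
definition cplx :: "real^'n^'m \<Rightarrow> complex^'n^'m" where
  "cplx A = (\<chi> i j. complex_of_real (A $ i $ j))"

text \<open>rk P = max over lambda in C of rk (A + lambda B).\<close>
definition pencil_rank :: "complex^'n^'n \<Rightarrow> complex^'n^'n \<Rightarrow> nat" where
  "pencil_rank A B = Max ((\<lambda>\<mu>. rank (\<chi> i j. A $ i $ j + \<mu> * B $ i $ j)) ` UNIV)"

text \<open>mu is an eigenvalue of the pencil: rk (A - mu B) < rk P.\<close>
definition pencil_eigenvalue :: "complex^'n^'n \<Rightarrow> complex^'n^'n \<Rightarrow> complex \<Rightarrow> bool" where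
  "pencil_eigenvalue A B \<mu> \<longleftrightarrow> rank (\<chi> i j. A $ i $ j - \<mu> * B $ i $ j) < pencil_rank A B"

end

theory Submission
  imports Defs "HOL-Complex_Analysis.Cauchy_Integral_Formula"
begin


lemma int_bound_aux:
  fixes G :: "real \<Rightarrow> 'v::euclidean_space"
  assumes "G integrable_on {0..c}" "0 \<le> c" "\<And>s. norm (G s) \<le> B"
  shows "norm (integral {0..c} G) \<le> B * c"
proof -
  have B: "0 \<le> B" using assms(3)[of 0] norm_ge_zero order_trans by blast
  have "norm (integral {0..c} G) \<le> B * measure lborel (cbox 0 c)"
    using has_integral_bound[OF B, of G "integral {0..c} G" 0 c] assms(1,3)
    by (simp add: has_integral_integral)
  then show ?thesis using assms(2) by simp
qed

lemma picard_exist: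
  fixes f :: "real \<Rightarrow> 'v::euclidean_space \<Rightarrow> 'v"
  assumes h0: "h0 > 0" and R: "R > 0"
    and cont: "continuous_on ({0..h0} \<times> cball y0 R) (\<lambda>(t,y). f t y)"
    and lip: "\<And>t y z. t \<in> {0..h0} \<Longrightarrow> y \<in> cball y0 R \<Longrightarrow> z \<in> cball y0 R \<Longrightarrow>
                 norm (f t y - f t z) \<le> L * norm (y - z)"
  shows "\<exists>h>0. \<exists>y. y 0 = y0 \<and> (\<forall>t\<in>{0..h}. y t \<in> cball y0 R \<and>
            (y has_vector_derivative f t (y t)) (at t within {0..h}))"
proof -
  define S where "S = {0..h0} \<times> cball y0 R"
  have "compact S" unfolding S_def by (simp add: compact_Times)
  then have "compact ((\<lambda>(t,y). f t y) ` S)" using cont compact_continuous_image S_def by blast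
  then obtain K0 where K0: "\<And>p. p \<in> S \<Longrightarrow> norm ((\<lambda>(t,y). f t y) p) \<le> K0"
    using compact_imp_bounded bounded_iff by (metis imageI)
  define K where "K = max K0 1"
  have Kpos: "K > 0" unfolding K_def by simp
  have fK: "norm (f t y) \<le> K" if "t \<in> {0..h0}" "y \<in> cball y0 R" for t y
    using K0[of "(t,y)"] that unfolding K_def S_def by fastforce
  define L' where "L' = \<bar>L\<bar> + 1"
  have L'pos: "L' > 0" unfolding L'_def by simp
  have lip': "norm (f t y - f t z) \<le> L' * norm (y - z)" if "t \<in> {0..h0}" "y \<in> cball y0 R" "z \<in> cball y0 R" for t y z
  proof -
    have "L * norm (y - z) \<le> L' * norm (y - z)" unfolding L'_def
      by (intro mult_right_mono) auto
    then show ?thesis using lip[OF that] by linarith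
  qed
  define h where "h = min h0 (min (R / K) (1 / (2 * L')))"
  have hpos: "h > 0" unfolding h_def using h0 R Kpos L'pos by simp
  have hh0: "h \<le> h0" unfolding h_def by simp
  have "h \<le> R / K" unfolding h_def by simp
  then have hK: "h * K \<le> R" using Kpos by (simp add: field_simps)
  have "h \<le> 1 / (2 * L')" unfolding h_def by simp
  then have hL: "h * L' \<le> 1/2" using L'pos by (simp add: field_simps)
  define cl where "cl = (\<lambda>s::real. max 0 (min h s))"
  have cl_in: "cl s \<in> {0..h}" for s unfolding cl_def using hpos by auto
  have cl_in0: "cl s \<in> {0..h0}" for s using cl_in[of s] hh0 by auto
  have cl_id: "s \<in> {0..h} \<Longrightarrow> cl s = s" for s unfolding cl_def by auto
  have cl_cont: "continuous_on UNIV cl" unfolding cl_def by (intro continuous_intros)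
  define C where "C = cball y0 R"
  have C: "convex C" "closed C" "C \<noteq> {}" unfolding C_def using R by auto
  define pr where "pr = closest_point C"
  have pr_in: "pr y \<in> C" for y unfolding pr_def using closest_point_in_set C by blast
  have pr_id: "y \<in> C \<Longrightarrow> pr y = y" for y unfolding pr_def by (rule closest_point_self)
  have pr_lip: "dist (pr x) (pr y) \<le> dist x y" for x y
    unfolding pr_def using closest_point_lipschitz C by blast
  have pr_cont: "continuous_on UNIV pr"
    unfolding pr_def using continuous_on_closest_point C by blast
  define g where "g = (\<lambda>s y. f (cl s) (pr y))"
  have gK: "norm (g s y) \<le> K" for s y
    unfolding g_def using fK cl_in pr_in hh0 C_def by force
  have glip: "norm (g s y - g s z) \<le> L' * norm (y - z)" for s y z
  proof -
    have "norm (g s y - g s z) \<le> L' * norm (pr y - pr z)"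
      unfolding g_def using lip' cl_in pr_in hh0 C_def by force
    also have "\<dots> \<le> L' * norm (y - z)"
      using pr_lip[of y z] L'pos by (simp add: dist_norm)
    finally show ?thesis .
  qed
  have gcont: "continuous_on UNIV (\<lambda>s. g s (u s))" if "continuous_on UNIV u" for u
  proof -
    have "continuous_on UNIV ((\<lambda>(t,y). f t y) \<circ> (\<lambda>s. (cl s, pr (u s))))"
    proof (rule continuous_on_compose)
      show "continuous_on UNIV (\<lambda>s. (cl s, pr (u s)))"
        using cl_cont pr_cont that
        by (intro continuous_intros continuous_on_compose2[OF pr_cont]) auto
      show "continuous_on ((\<lambda>s. (cl s, pr (u s))) ` UNIV) (\<lambda>(t, y). f t y)"
        apply (rule continuous_on_subset[OF cont])
        using cl_in0 pr_in C_def by auto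
    qed
    then show ?thesis unfolding g_def o_def by simp
  qed
  define T where "T = (\<lambda>u::(real \<Rightarrow>\<^sub>C 'v). Bcontfun (\<lambda>t. y0 + integral {0..cl t} (\<lambda>s. g s (u s))))"
  have intg: "(\<lambda>s. g s (u s)) integrable_on {0..b}" for u :: "real \<Rightarrow>\<^sub>C 'v" and b
    by (rule integrable_continuous_real) (rule continuous_on_subset[OF gcont], auto)
  have Tmem: "(\<lambda>t. y0 + integral {0..cl t} (\<lambda>s. g s (u s))) \<in> bcontfun" for u :: "real \<Rightarrow>\<^sub>C 'v"
  proof (rule bcontfun_normI)
    have c1: "continuous_on {0..h} (\<lambda>x. integral {0..x} (\<lambda>s. g s (u s)))"
      by (rule indefinite_integral_continuous_1[OF intg])
    have "continuous_on UNIV ((\<lambda>x. integral {0..x} (\<lambda>s. g s (u s))) \<circ> cl)"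
      by (rule continuous_on_compose[OF cl_cont continuous_on_subset[OF c1]]) (use cl_in in auto)
    then show "continuous_on UNIV (\<lambda>t. y0 + integral {0..cl t} (\<lambda>s. g s (u s)))"
      unfolding o_def by (intro continuous_intros)
    fix t
    have "norm (integral {0..cl t} (\<lambda>s. g s (u s))) \<le> K * cl t"
      using int_bound_aux[OF intg[of u "cl t"]] gK cl_in[of t] by simp
    also have "\<dots> \<le> K * h" using cl_in[of t] Kpos by (intro mult_left_mono) auto
    finally show "norm (y0 + integral {0..cl t} (\<lambda>s. g s (u s))) \<le> norm y0 + K * h"
      using norm_triangle_ineq[of y0] by (meson add_left_mono order_trans)
  qed
  have Tapp: "apply_bcontfun (T u) t = y0 + integral {0..cl t} (\<lambda>s. g s (u s))" for u t
    unfolding T_def using Tmem[of u] by (simp add: Bcontfun_inverse)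
  have contr: "dist (T u) (T v) \<le> (1/2) * dist u v" for u v
  proof (rule dist_bound)
    fix t
    have "norm (integral {0..cl t} (\<lambda>s. g s (u s)) - integral {0..cl t} (\<lambda>s. g s (v s)))
          = norm (integral {0..cl t} (\<lambda>s. g s (u s) - g s (v s)))"
      using intg by (simp add: integral_diff)
    also have "\<dots> \<le> (L' * dist u v) * cl t"
    proof -
      have "norm (g s (u s) - g s (v s)) \<le> L' * dist u v" for s
      proof -
        have "norm (u s - v s) \<le> dist u v" using dist_bounded[of u s v] by (simp add: dist_norm)
        then have "L' * norm (u s - v s) \<le> L' * dist u v" using L'pos by (intro mult_left_mono) auto
        then show ?thesis using glip[of s "u s" "v s"] by linarith
      qed
      then show ?thesis
        using int_bound_aux[OF integrable_diff[OF intg[of u "cl t"] intg[of v "cl t"]]] cl_in[of t] by simp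
    qed
    also have "\<dots> \<le> (L' * dist u v) * h"
      using cl_in[of t] L'pos by (intro mult_left_mono) auto
    also have "\<dots> \<le> (1/2) * dist u v"
    proof -
      have "(L' * dist u v) * h = (h * L') * dist u v" by simp
      also have "\<dots> \<le> (1/2) * dist u v" using hL by (intro mult_right_mono) auto
      finally show ?thesis .
    qed
    finally show "dist (apply_bcontfun (T u) t) (apply_bcontfun (T v) t) \<le> (1/2) * dist u v"
      unfolding Tapp dist_norm by simp
  qed
  obtain Y where Y: "T Y = Y" using banach_fix_type[of "1/2" T] contr by auto
  define y where "y = apply_bcontfun Y"
  have yeq: "y t = y0 + integral {0..cl t} (\<lambda>s. g s (y s))" for t
    unfolding y_def using Tapp[of Y t] Y by simp
  have yC: "y t \<in> C" if "t \<in> {0..h}" for t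
  proof -
    have "norm (integral {0..cl t} (\<lambda>s. g s (y s))) \<le> K * cl t"
      using int_bound_aux[OF intg[of Y "cl t"]] gK cl_in[of t] unfolding y_def by simp
    also have "\<dots> \<le> K * h" using cl_in[of t] Kpos by (intro mult_left_mono) auto
    finally have "norm (y t - y0) \<le> R" using yeq[of t] hK by (simp add: mult.commute)
    then show ?thesis unfolding C_def by (simp add: dist_norm norm_minus_commute)
  qed
  have gy: "g s (y s) = f s (y s)" if "s \<in> {0..h}" for s
    unfolding g_def using cl_id[OF that] pr_id[OF yC[OF that]] by simp
  have ycont: "continuous_on UNIV y" unfolding y_def by simp
  show ?thesis
  proof (intro exI[of _ h] conjI hpos exI[of _ y] ballI)
    show "y 0 = y0" using yeq[of 0] cl_id[of 0] hpos by simp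
    fix t assume t: "t \<in> {0..h}"
    show "y t \<in> cball y0 R" using yC[OF t] C_def by simp
    have "((\<lambda>u. integral {0..u} (\<lambda>s. g s (y s))) has_vector_derivative g t (y t)) (at t within {0..h})"
      by (rule integral_has_vector_derivative[OF continuous_on_subset[OF gcont[OF ycont]] t]) auto
    then have "((\<lambda>u. y0 + integral {0..u} (\<lambda>s. g s (y s))) has_vector_derivative g t (y t)) (at t within {0..h})"
      using has_vector_derivative_add[OF has_vector_derivative_const] by fastforce
    then have "(y has_vector_derivative g t (y t)) (at t within {0..h})"
    proof (rule has_vector_derivative_transform[OF t, rotated])
      fix x assume x: "x \<in> {0..h}"
      show "y x = y0 + integral {0..x} (\<lambda>s. g s (y s))"
        using yeq[of x] cl_id[OF x] by simp
    qed
    then show "(y has_vector_derivative f t (y t)) (at t within {0..h})"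
      using gy[OF t] by simp
  qed
qed


lemma norm_vec_le_sum: "norm (x :: 'a::real_normed_vector^'n) \<le> (\<Sum>i\<in>UNIV. norm (x $ i))"
  unfolding norm_vec_def by (rule L2_set_le_sum) simp

lemma mm_norm_le:
  fixes a :: "'a::real_normed_field^'n^'m" and b :: "'a^'p^'n"
  shows "norm (a ** b) \<le> norm a * norm b * (real CARD('m) * real CARD('p) * real CARD('n))"
proof -
    have e: "norm ((a ** b) $ i $ j) \<le> real CARD('n) * (norm a * norm b)" for i j
    proof -
      have "norm ((a ** b) $ i $ j) = norm (\<Sum>k\<in>UNIV. a $ i $ k * b $ k $ j)"
        by (simp add: matrix_matrix_mult_def)
      also have "\<dots> \<le> (\<Sum>k\<in>UNIV. norm (a $ i $ k * b $ k $ j))" by (rule norm_sum)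
      also have "\<dots> \<le> (\<Sum>k\<in>(UNIV::'n set). norm a * norm b)"
      proof (rule sum_mono)
        fix k
        have "norm (a $ i $ k) \<le> norm a" using order_trans[OF Finite_Cartesian_Product.norm_nth_le Finite_Cartesian_Product.norm_nth_le] .
        moreover have "norm (b $ k $ j) \<le> norm b" using order_trans[OF Finite_Cartesian_Product.norm_nth_le Finite_Cartesian_Product.norm_nth_le] .
        ultimately show "norm (a $ i $ k * b $ k $ j) \<le> norm a * norm b"
          by (simp add: norm_mult mult_mono)
      qed
      finally show ?thesis by simp
    qed
    have "norm (a ** b) \<le> (\<Sum>i\<in>UNIV. norm ((a ** b) $ i))" by (rule norm_vec_le_sum)
    also have "\<dots> \<le> (\<Sum>i\<in>(UNIV::'m set). \<Sum>j\<in>(UNIV::'p set). norm ((a ** b) $ i $ j))"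
      by (intro sum_mono norm_vec_le_sum)
    also have "\<dots> \<le> (\<Sum>i\<in>(UNIV::'m set). \<Sum>j\<in>(UNIV::'p set). real CARD('n) * (norm a * norm b))"
      by (intro sum_mono e)
    also have "\<dots> = norm a * norm b * (real CARD('m) * real CARD('p) * real CARD('n))"
      by simp
    finally show ?thesis .
qed

lemma mm_bounded_bilinear:
  "bounded_bilinear ((**) :: 'a::real_normed_field^'n^'m \<Rightarrow> 'a^'p^'n \<Rightarrow> 'a^'p^'m)"
proof
  fix a a' :: "'a^'n^'m" and b b' :: "'a^'p^'n" and r :: real
  show "(a + a') ** b = a ** b + a' ** b"
    by (simp add: matrix_matrix_mult_def distrib_right sum.distrib vec_eq_iff)
  show "a ** (b + b') = a ** b + a ** b'" by (rule matrix_add_ldistrib)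
  show "(r *\<^sub>R a) ** b = r *\<^sub>R (a ** b)"
    by (simp add: matrix_matrix_mult_def vec_eq_iff scaleR_sum_right)
  show "a ** (r *\<^sub>R b) = r *\<^sub>R (a ** b)"
    by (simp add: matrix_matrix_mult_def vec_eq_iff scaleR_sum_right)
next
  show "\<exists>K. \<forall>(a::'a^'n^'m) (b::'a^'p^'n). norm (a ** b) \<le> norm a * norm b * K"
    using mm_norm_le by blast
qed

lemma rank_mult_le_right_gen:
  fixes A :: "'a::field^'n^'m" and B :: "'a^'p^'n"
  shows "rank (A ** B) \<le> rank B"
proof -
  have "rows (A ** B) \<subseteq> vec.span (rows B)"
  proof
    fix r assume "r \<in> rows (A ** B)"
    then obtain i where r: "r = row i (A ** B)" by (auto simp: rows_def)
    have "r = (\<Sum>k\<in>UNIV. A $ i $ k *s row k B)"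
      unfolding r row_def matrix_matrix_mult_def by (simp add: vec_eq_iff sum_component)
    also have "\<dots> \<in> vec.span (rows B)"
      by (intro vec.span_sum vec.span_scale vec.span_base) (auto simp: rows_def)
    finally show "r \<in> vec.span (rows B)" .
  qed
  then show ?thesis unfolding row_rank_def_gen by (rule vec.dim_mono)
qed


lemma rank_mult_le_left_gen:
  fixes A :: "'a::field^'n^'m" and B :: "'a^'p^'n"
  shows "rank (A ** B) \<le> rank A"
proof -
  have ri: "row i (A ** B) = transpose B *v row i A" for i
    by (simp add: row_def matrix_matrix_mult_def matrix_vector_mult_def transpose_def vec_eq_iff mult.commute)
  have "rows (A ** B) = (\<lambda>r. transpose B *v r) ` rows A"
    unfolding rows_def by (auto simp: ri)
  moreover have "vec.dim ((\<lambda>r. transpose B *v r) ` rows A) \<le> vec.dim (rows A)"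
    by (rule vec.dim_image_le) (rule matrix_vector_mul_linear_gen)
  ultimately show ?thesis unfolding row_rank_def_gen by simp
qed



lemma transpose_bounded_linear:
  "bounded_linear (transpose :: 'a::real_normed_vector^'n^'m \<Rightarrow> 'a^'m^'n)"
proof (rule bounded_linear_intro[where K="real CARD('m) * real CARD('n)"])
  fix A B :: "'a^'n^'m" and r :: real
  show "transpose (A + B) = transpose A + transpose B"
    by (simp add: transpose_def vec_eq_iff)
  show "transpose (r *\<^sub>R A) = r *\<^sub>R transpose A"
    by (simp add: transpose_def vec_eq_iff)
  have "norm (transpose A) \<le> (\<Sum>i\<in>(UNIV::'n set). \<Sum>j\<in>(UNIV::'m set). norm (transpose A $ i $ j))"
    by (rule order_trans[OF norm_vec_le_sum]) (intro sum_mono norm_vec_le_sum)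
  also have "\<dots> \<le> (\<Sum>i\<in>(UNIV::'n set). \<Sum>j\<in>(UNIV::'m set). norm A)"
    by (intro sum_mono) (simp add: transpose_def order_trans[OF Finite_Cartesian_Product.norm_nth_le Finite_Cartesian_Product.norm_nth_le])
  also have "\<dots> = norm A * (real CARD('m) * real CARD('n))" by simp
  finally show "norm (transpose A) \<le> norm A * (real CARD('m) * real CARD('n))" .
qed

lemma transpose_neg: "transpose (- A) = - transpose (A::'a::ab_group_add^'n^'m)"
  by (simp add: transpose_def vec_eq_iff)

lemma continuous_on_det:
  fixes X :: "real \<Rightarrow> 'a::{real_normed_field}^'n^'n"
  assumes "continuous_on S X"
  shows "continuous_on S (\<lambda>t. det (X t))"
proof -
  have c: "continuous_on S (\<lambda>t. X t $ i $ j)" for i j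
    using bounded_linear.continuous_on[OF bounded_linear_vec_nth
          bounded_linear.continuous_on[OF bounded_linear_vec_nth assms]] .
  show ?thesis unfolding det_def
    by (intro continuous_intros c)
qed

lemma rank_nonincreasing:
  fixes P M :: "real \<Rightarrow> complex^'n^'n"
  assumes h: "h > 0" and Mc: "continuous_on {0..h} M"
    and Pd: "\<And>t. t \<in> {0..h} \<Longrightarrow>
       (P has_vector_derivative (M t ** P t + P t ** transpose (M t))) (at t within {0..h})"
  shows "\<exists>h'>0. \<forall>t\<in>{0..h'}. rank (P t) \<le> rank (P 0)"
proof -
  interpret BB: bounded_bilinear "(**) :: complex^'n^'n \<Rightarrow> complex^'n^'n \<Rightarrow> complex^'n^'n"
    by (rule mm_bounded_bilinear)
  interpret TL: bounded_linear "transpose :: complex^'n^'n \<Rightarrow> complex^'n^'n"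
    by (rule transpose_bounded_linear)
  define MT where "MT = (\<lambda>t. transpose (M t))"
  have MTc: "continuous_on {0..h} MT" unfolding MT_def by (rule TL.continuous_on[OF Mc])
  have "compact (MT ` {0..h})" by (rule compact_continuous_image[OF MTc]) simp
  then obtain B where B: "\<And>t. t \<in> {0..h} \<Longrightarrow> norm (MT t) \<le> B"
    using compact_imp_bounded bounded_iff by (metis imageI)
  obtain K where K: "\<And>(a::complex^'n^'n) (b::complex^'n^'n). norm (a ** b) \<le> norm a * norm b * K" and Kpos: "K > 0"
    using BB.pos_bounded by blast
  define f where "f = (\<lambda>t (X::complex^'n^'n). - (MT t ** X))"
  have fc: "continuous_on ({0..h} \<times> cball (mat 1) 1) (\<lambda>(t,X). f t X)"
  proof -
    have c1: "continuous_on ({0..h} \<times> cball (mat 1) 1) (\<lambda>p. MT (fst p))"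
      by (rule continuous_on_compose2[OF MTc continuous_on_fst]) auto
    have "continuous_on ({0..h} \<times> cball (mat 1) 1) (\<lambda>p. - (MT (fst p) ** snd p))"
      by (intro continuous_intros BB.continuous_on[OF c1])
    then show ?thesis unfolding f_def by (simp add: case_prod_beta)
  qed
  have fl: "norm (f t X - f t Y) \<le> (B * K) * norm (X - Y)"
    if "t \<in> {0..h}" for t X Y
  proof -
    have "f t X - f t Y = - (MT t ** (X - Y))" unfolding f_def by (simp add: BB.diff_right)
    then have "norm (f t X - f t Y) \<le> norm (MT t) * norm (X - Y) * K" using K by simp
    also have "\<dots> \<le> B * norm (X - Y) * K"
      using B[OF that] Kpos by (intro mult_right_mono) auto
    finally show ?thesis by (simp add: algebra_simps)
  qed
  obtain h1 Xi where h1: "h1 > 0" and Xi0: "Xi 0 = mat 1"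
    and XiD: "\<And>t. t \<in> {0..h1} \<Longrightarrow> (Xi has_vector_derivative f t (Xi t)) (at t within {0..h1})"
    and h1h: "h1 \<le> h"
  proof -
    obtain h1' Xi where "h1' > 0" "Xi 0 = mat 1"
      "\<forall>t\<in>{0..h1'}. Xi t \<in> cball (mat 1) 1 \<and> (Xi has_vector_derivative f t (Xi t)) (at t within {0..h1'})"
      using picard_exist[OF h zero_less_one fc fl] by blast
    then show ?thesis
      apply (intro that[of "min h1' h" Xi])
      apply (auto simp: h)
      apply (rule has_vector_derivative_within_subset[where S="{0..h1'}"])
      apply auto
      done
  qed
  have Xic: "continuous_on {0..h1} Xi"
    using XiD has_vector_derivative_continuous continuous_on_eq_continuous_within by blast
  have detc: "continuous_on {0..h1} (\<lambda>t. det (Xi t))" by (rule continuous_on_det[OF Xic])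
  obtain d where d: "d > 0" "\<And>t. t \<in> {0..h1} \<Longrightarrow> dist t 0 < d \<Longrightarrow> dist (det (Xi t)) (det (Xi 0)) < 1"
    using detc h1 unfolding continuous_on_iff
    by (metis atLeastAtMost_iff less_eq_real_def order_refl zero_less_one)
  define h2 where "h2 = min h1 (d/2)"
  have h2: "h2 > 0" "h2 \<le> h1" unfolding h2_def using h1 d by auto
  have detnz: "det (Xi t) \<noteq> 0" if "t \<in> {0..h2}" for t
  proof
    assume "det (Xi t) = 0"
    moreover have "dist (det (Xi t)) (det (Xi 0)) < 1"
      using d(2)[of t] that h2_def d(1) by (auto simp: dist_real_def)
    ultimately show False using Xi0 by simp
  qed
  define Q where "Q = (\<lambda>t. (transpose (Xi t) ** P t) ** Xi t)"
  have QD: "(Q has_derivative (\<lambda>_. 0)) (at t within {0..h1})" if t: "t \<in> {0..h1}" for t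
  proof -
    have tt: "t \<in> {0..h}" using t h1h by auto
    have PD': "(P has_vector_derivative (M t ** P t + P t ** transpose (M t))) (at t within {0..h1})"
      by (rule has_vector_derivative_within_subset[OF Pd[OF tt]]) (use h1h in auto)
    have TD: "((\<lambda>t. transpose (Xi t)) has_vector_derivative transpose (f t (Xi t))) (at t within {0..h1})"
      by (rule TL.has_vector_derivative[OF XiD[OF t]])
    have D1: "((\<lambda>t. transpose (Xi t) ** P t) has_vector_derivative
        (transpose (Xi t) ** (M t ** P t + P t ** transpose (M t)) + transpose (f t (Xi t)) ** P t)) (at t within {0..h1})"
      by (rule BB.has_vector_derivative[OF TD PD'])
    have D2: "(Q has_vector_derivative
        ((transpose (Xi t) ** P t) ** f t (Xi t) + (transpose (Xi t) ** (M t ** P t + P t ** transpose (M t)) + transpose (f t (Xi t)) ** P t) ** Xi t))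
        (at t within {0..h1})"
      unfolding Q_def by (rule BB.has_vector_derivative[OF D1 XiD[OF t]])
    have tf: "transpose (f t (Xi t)) = - (transpose (Xi t) ** M t)"
      unfolding f_def MT_def by (simp add: transpose_neg matrix_transpose_mul)
    have "(transpose (Xi t) ** P t) ** f t (Xi t) + (transpose (Xi t) ** (M t ** P t + P t ** transpose (M t)) + transpose (f t (Xi t)) ** P t) ** Xi t = 0"
      unfolding tf unfolding f_def MT_def
      by (simp add: BB.add_left BB.add_right BB.minus_left BB.minus_right matrix_mul_assoc)
    with D2 show ?thesis unfolding has_vector_derivative_def by simp
  qed
  obtain c where c: "\<And>t. t \<in> {0..h1} \<Longrightarrow> Q t = c"
    using has_derivative_zero_constant[of "{0..h1}" Q] QD by auto
  have Q0: "Q 0 = P 0" unfolding Q_def Xi0 by simp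
  have QP: "Q t = P 0" if "t \<in> {0..h1}" for t using c[OF that] c[of 0] h1 Q0 by auto
  show ?thesis
  proof (intro exI[of _ h2] conjI h2 ballI)
    fix t assume t: "t \<in> {0..h2}"
    then have t1: "t \<in> {0..h1}" using h2 by auto
    have "invertible (Xi t)" using detnz[OF t] invertible_det_nz by blast
    then obtain Y where Y1: "Xi t ** Y = mat 1" and Y2: "Y ** Xi t = mat 1"
      unfolding invertible_def by blast
    have YT: "transpose Y ** transpose (Xi t) = mat 1"
      using Y1 by (metis matrix_transpose_mul transpose_mat)
    have "P t = transpose Y ** (Q t) ** Y"
      unfolding Q_def using YT Y1 by (metis matrix_mul_assoc matrix_mul_lid matrix_mul_rid)
    also have "\<dots> = transpose Y ** (P 0 ** Y)" using QP[OF t1] by (simp add: matrix_mul_assoc)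
    finally have "rank (P t) \<le> rank (P 0 ** Y)" using rank_mult_le_right_gen by metis
    also have "\<dots> \<le> rank (P 0)" by (rule rank_mult_le_left_gen)
    finally show "rank (P t) \<le> rank (P 0)" .
  qed
qed



lemma vec_sum_axis: "x = (\<Sum>i\<in>UNIV. axis i (x $ i))" for x :: "'b::comm_monoid_add^'n"
  by (simp add: vec_eq_iff sum_component axis_def)

lemma bounded_linear_axis': "bounded_linear (axis i :: 'b::real_normed_vector \<Rightarrow> 'b^'n)"
proof (rule bounded_linear_intro[where K=1])
  fix x y :: 'b and r :: real
  show "axis i (x + y) = (axis i x :: 'b^'n) + axis i y" by (simp add: axis_def vec_eq_iff)
  show "axis i (r *\<^sub>R x) = r *\<^sub>R (axis i x :: 'b^'n)" by (simp add: axis_def vec_eq_iff)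
  have "norm (axis i x :: 'b^'n) \<le> (\<Sum>k\<in>UNIV. norm ((axis i x :: 'b^'n) $ k))"
    unfolding norm_vec_def by (rule L2_set_le_sum) simp
  also have "\<dots> = norm x" by (simp add: axis_def if_distrib[of norm] cong: if_cong)
  finally show "norm (axis i x :: 'b^'n) \<le> norm x * 1" by simp
qed

lemma vec_has_vector_derivative:
  fixes f :: "real \<Rightarrow> 'b::real_normed_vector^'n"
  assumes "\<And>i. ((\<lambda>t. f t $ i) has_vector_derivative f' $ i) F"
  shows "(f has_vector_derivative f') F"
proof -
  have "((\<lambda>t. \<Sum>i\<in>UNIV. axis i (f t $ i)) has_vector_derivative (\<Sum>i\<in>UNIV. axis i (f' $ i))) F"
    by (intro has_vector_derivative_sum bounded_linear.has_vector_derivative[OF bounded_linear_axis'] assms)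
  then show ?thesis using vec_sum_axis[of f'] vec_sum_axis[of "f t" for t] by simp
qed

lemma lipschitz_from_partials:
  fixes g :: "'a::{real_normed_field,euclidean_space}^'n \<Rightarrow> 'a"
  assumes S: "convex S"
    and gd: "\<And>x. x \<in> S \<Longrightarrow> (g has_derivative (\<lambda>v. \<Sum>l\<in>UNIV. v $ l * dg x l)) (at x)"
    and C: "\<And>x l. x \<in> S \<Longrightarrow> norm (dg x l) \<le> C"
    and xy: "x \<in> S" "y \<in> S"
  shows "norm (g x - g y) \<le> (real CARD('n) * C) * norm (x - y)"
proof (rule differentiable_bound[OF S _ _ xy])
  fix z assume z: "z \<in> S"
  show "(g has_derivative (\<lambda>v. \<Sum>l\<in>UNIV. v $ l * dg z l)) (at z within S)"
    using gd[OF z] by (rule has_derivative_at_withinI)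
  show "onorm (\<lambda>v. \<Sum>l\<in>UNIV. v $ l * dg z l) \<le> real CARD('n) * C"
  proof (rule onorm_le)
    fix v :: "'a^'n"
    have "norm (\<Sum>l\<in>UNIV. v $ l * dg z l) \<le> (\<Sum>l\<in>UNIV. norm (v $ l * dg z l))" by (rule norm_sum)
    also have "\<dots> \<le> (\<Sum>l\<in>(UNIV::'n set). norm v * C)"
    proof (rule sum_mono)
      fix l
      have "norm (v $ l) \<le> norm v" by (rule Finite_Cartesian_Product.norm_nth_le)
      then show "norm (v $ l * dg z l) \<le> norm v * C"
        using C[OF z, of l] by (simp add: norm_mult mult_mono)
    qed
    also have "\<dots> = real CARD('n) * C * norm v" by simp
    finally show "norm (\<Sum>l\<in>UNIV. v $ l * dg z l) \<le> real CARD('n) * C * norm v" .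
  qed
qed

lemma jacobi_flow_identity:
  fixes P :: "'a::comm_ring^'n^'n" and d :: "'n \<Rightarrow> 'n \<Rightarrow> 'n \<Rightarrow> 'a"
  assumes skew: "\<And>a b. P $ a $ b = - P $ b $ a"
    and dskew: "\<And>l a b. d l a b = - d l b a"
    and jac: "(\<Sum>l\<in>UNIV. P $ a $ l * d l b j + P $ b $ l * d l j a + P $ j $ l * d l a b) = 0"
  shows "(\<Sum>l\<in>UNIV. P $ l $ j * d l a b) = (\<Sum>l\<in>UNIV. d l a j * P $ l $ b + P $ a $ l * d l b j)"
proof -
  have e1: "(\<Sum>l\<in>UNIV. P $ l $ j * d l a b) = - (\<Sum>l\<in>UNIV. P $ j $ l * d l a b)"
    by (subst skew) (simp add: sum_negf)
  have e2: "(\<Sum>l\<in>UNIV. P $ b $ l * d l j a) = (\<Sum>l\<in>UNIV. d l a j * P $ l $ b)"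
    by (rule sum.cong[OF refl]) (metis dskew skew minus_mult_minus mult.commute)
  from jac have "(\<Sum>l\<in>UNIV. P $ a $ l * d l b j) + (\<Sum>l\<in>UNIV. P $ b $ l * d l j a) + (\<Sum>l\<in>UNIV. P $ j $ l * d l a b) = 0"
    by (simp add: sum.distrib)
  then show ?thesis using e1 e2 by (simp add: sum.distrib add_eq_0_iff algebra_simps)
qed


lemma norm_vec_le_sum': "norm (x :: 'a::real_normed_vector^'n) \<le> (\<Sum>i\<in>UNIV. norm (x $ i))"
  unfolding norm_vec_def by (rule L2_set_le_sum) simp

lemma sum_axis_mult: "(\<Sum>m\<in>UNIV. axis l 1 $ m * f m) = (f l :: 'a::semiring_1)"
proof -
  have "(\<Sum>m\<in>UNIV. axis l 1 $ m * f m) = (\<Sum>m\<in>UNIV. if m = l then f m else 0)"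
    by (rule sum.cong) (auto simp: axis_def)
  then show ?thesis by simp
qed

lemma partial_skew:
  fixes P :: "'a::{real_normed_field,euclidean_space}^'n \<Rightarrow> 'a^'n^'n"
  assumes M: "open M" "x \<in> M"
    and Pd: "\<And>x a b. x \<in> M \<Longrightarrow> ((\<lambda>y. P y $ a $ b) has_derivative (\<lambda>v. \<Sum>l\<in>UNIV. v $ l * dP x l a b)) (at x)"
    and skew: "\<And>x a b. x \<in> M \<Longrightarrow> P x $ a $ b = - P x $ b $ a"
  shows "dP x l a b = - dP x l b a"
proof -
  have "((\<lambda>y. - P y $ b $ a) has_derivative (\<lambda>v. - (\<Sum>m\<in>UNIV. v $ m * dP x m b a))) (at x)"
    by (rule has_derivative_minus[OF Pd[OF M(2)]])
  then have "((\<lambda>y. P y $ a $ b) has_derivative (\<lambda>v. - (\<Sum>m\<in>UNIV. v $ m * dP x m b a))) (at x)"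
    by (rule has_derivative_transform_within_open[OF _ M(1) M(2)]) (simp add: skew[of _ a b])
  then have "(\<lambda>v. \<Sum>m\<in>UNIV. v $ m * dP x m a b) = (\<lambda>v. - (\<Sum>m\<in>UNIV. v $ m * dP x m b a))"
    using has_derivative_unique[OF Pd[OF M(2)]] by blast
  from fun_cong[OF this, of "axis l 1"]
  show ?thesis by (simp add: sum_axis_mult)
qed

lemma flow_lemma:
  fixes P :: "'a::{real_normed_field,euclidean_space}^'n \<Rightarrow> 'a^'n^'n"
    and dP :: "'a^'n \<Rightarrow> 'n \<Rightarrow> 'n \<Rightarrow> 'n \<Rightarrow> 'a" and j :: 'n
  assumes M: "open M" "x0 \<in> M"
    and Pd: "\<And>x a b. x \<in> M \<Longrightarrow> ((\<lambda>y. P y $ a $ b) has_derivative (\<lambda>v. \<Sum>l\<in>UNIV. v $ l * dP x l a b)) (at x)"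
    and dPc: "\<And>l a b. continuous_on M (\<lambda>x. dP x l a b)"
    and skew: "\<And>x a b. x \<in> M \<Longrightarrow> P x $ a $ b = - P x $ b $ a"
    and jac: "\<And>x a b c. x \<in> M \<Longrightarrow>
       (\<Sum>l\<in>UNIV. P x $ a $ l * dP x l b c + P x $ b $ l * dP x l c a + P x $ c $ l * dP x l a b) = 0"
  shows "\<exists>h>0. \<exists>\<gamma>. \<gamma> 0 = x0 \<and> continuous_on {0..h} (\<lambda>t. \<chi> a l. dP (\<gamma> t) l a j) \<and>
     (\<forall>t\<in>{0..h}. \<gamma> t \<in> M \<and>
        (\<gamma> has_vector_derivative (\<chi> a. P (\<gamma> t) $ a $ j)) (at t within {0..h}) \<and>
        ((\<lambda>t. P (\<gamma> t)) has_vector_derivative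
          ((\<chi> a l. dP (\<gamma> t) l a j) ** P (\<gamma> t) + P (\<gamma> t) ** transpose (\<chi> a l. dP (\<gamma> t) l a j)))
          (at t within {0..h}))"
proof -
  obtain R where R: "R > 0" "cball x0 R \<subseteq> M" using M open_contains_cball by blast
  define S where "S = cball x0 R"
  have SM: "S \<subseteq> M" using R S_def by simp
  define G where "G = (\<lambda>x. \<Sum>l\<in>UNIV. \<Sum>a\<in>UNIV. norm (dP x l a j))"
  have Gc: "continuous_on S G" unfolding G_def
    by (intro continuous_intros continuous_on_subset[OF dPc SM])
  have "compact (G ` S)" by (rule compact_continuous_image[OF Gc]) (simp add: S_def)
  then obtain C where C0: "\<And>x. x \<in> S \<Longrightarrow> norm (G x) \<le> C"
    using compact_imp_bounded bounded_iff by (metis imageI)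
  have C: "norm (dP x l a j) \<le> C" if "x \<in> S" for x l a
  proof -
    have "norm (dP x l a j) \<le> (\<Sum>a\<in>UNIV. norm (dP x l a j))"
      by (rule member_le_sum) auto
    also have "\<dots> \<le> G x" unfolding G_def
      by (rule member_le_sum[where f="\<lambda>l. \<Sum>a\<in>UNIV. norm (dP x l a j)"]) (auto intro: sum_nonneg)
    also have "\<dots> \<le> C" using C0[OF that] by simp
    finally show ?thesis .
  qed
  define X where "X = (\<lambda>y. \<chi> a. P y $ a $ j)"
  have Xlip: "norm (X y - X z) \<le> (real CARD('n) * (real CARD('n) * C)) * norm (y - z)"
    if "y \<in> S" "z \<in> S" for y z
  proof -
    have "norm (X y - X z) \<le> (\<Sum>a\<in>UNIV. norm ((X y - X z) $ a))" by (rule norm_vec_le_sum')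
    also have "\<dots> \<le> (\<Sum>a\<in>(UNIV::'n set). (real CARD('n) * C) * norm (y - z))"
    proof (rule sum_mono)
      fix a
      have "norm (P y $ a $ j - P z $ a $ j) \<le> (real CARD('n) * C) * norm (y - z)"
      proof (rule lipschitz_from_partials[where dg="\<lambda>x l. dP x l a j", OF _ _ _ that])
        show "convex S" by (simp add: S_def)
        show "((\<lambda>y. P y $ a $ j) has_derivative (\<lambda>v. \<Sum>l\<in>UNIV. v $ l * dP x l a j)) (at x)" if "x \<in> S" for x
          using Pd SM that by blast
        show "norm (dP x l a j) \<le> C" if "x \<in> S" for x l using C that by blast
      qed
      then show "norm ((X y - X z) $ a) \<le> (real CARD('n) * C) * norm (y - z)"
        unfolding X_def by simp
    qed
    also have "\<dots> = (real CARD('n) * (real CARD('n) * C)) * norm (y - z)" by simp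
    finally show ?thesis .
  qed
  have Xc: "continuous_on M X"
  proof -
    have "continuous_on M (\<lambda>y. P y $ a $ j)" for a
    proof (rule continuous_at_imp_continuous_on, rule ballI)
      fix x assume "x \<in> M"
      show "isCont (\<lambda>y. P y $ a $ j) x" by (rule has_derivative_continuous[OF Pd[OF \<open>x \<in> M\<close>]])
    qed
    then show ?thesis unfolding X_def by (intro continuous_on_vec_lambda)
  qed
  have fc: "continuous_on ({0..1::real} \<times> cball x0 R) (\<lambda>(t,y). (\<lambda>t y. X y) t y)"
  proof -
    have "continuous_on ({0..1::real} \<times> cball x0 R) (\<lambda>p. X (snd p))"
      by (rule continuous_on_compose2[OF Xc continuous_on_snd]) (use R in auto)
    then show ?thesis by (simp add: case_prod_beta)
  qed
  obtain h \<gamma> where h: "h > 0" and g0: "\<gamma> 0 = x0"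
    and gS: "\<And>t. t \<in> {0..h} \<Longrightarrow> \<gamma> t \<in> cball x0 R"
    and gD: "\<And>t. t \<in> {0..h} \<Longrightarrow> (\<gamma> has_vector_derivative X (\<gamma> t)) (at t within {0..h})"
  proof -
    have "\<exists>h>0. \<exists>y. y 0 = x0 \<and> (\<forall>t\<in>{0..h}. y t \<in> cball x0 R \<and>
            (y has_vector_derivative (\<lambda>t y. X y) t (y t)) (at t within {0..h}))"
    proof (rule picard_exist[OF zero_less_one R(1) fc])
      fix t y z assume "y \<in> cball x0 R" "z \<in> cball x0 R"
      then show "norm ((\<lambda>t y. X y) t y - (\<lambda>t y. X y) t z) \<le> (real CARD('n) * (real CARD('n) * C)) * norm (y - z)"
        using Xlip unfolding S_def by simp
    qed
    then show ?thesis using that by blast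
  qed
  have gM: "\<gamma> t \<in> M" if "t \<in> {0..h}" for t using gS[OF that] R by auto
  have gc: "continuous_on {0..h} \<gamma>"
    using gD has_vector_derivative_continuous continuous_on_eq_continuous_within by blast
  have Mgc: "continuous_on {0..h} (\<lambda>t. \<chi> a l. dP (\<gamma> t) l a j)"
  proof -
    have "continuous_on {0..h} (\<lambda>t. dP (\<gamma> t) l a j)" for l a
      by (rule continuous_on_compose2[OF dPc gc]) (use gM in auto)
    then show ?thesis by (intro continuous_on_vec_lambda)
  qed
  show ?thesis
  proof (intro exI[of _ h] conjI h exI[of _ \<gamma>] g0 Mgc ballI)
    fix t assume t: "t \<in> {0..h}"
    show "\<gamma> t \<in> M" by (rule gM[OF t])
    show "(\<gamma> has_vector_derivative (\<chi> a. P (\<gamma> t) $ a $ j)) (at t within {0..h})"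
      using gD[OF t] unfolding X_def .
    have ent: "((\<lambda>t. P (\<gamma> t) $ a $ b) has_vector_derivative
                 (\<Sum>l\<in>UNIV. P (\<gamma> t) $ l $ j * dP (\<gamma> t) l a b)) (at t within {0..h})" for a b
    proof -
      have "((\<lambda>y. P y $ a $ b) has_derivative (\<lambda>v. \<Sum>l\<in>UNIV. v $ l * dP (\<gamma> t) l a b)) (at (\<gamma> t) within \<gamma> ` {0..h})"
        by (rule has_derivative_at_withinI[OF Pd[OF gM[OF t]]])
      from diff_chain_within[OF gD[OF t, unfolded has_vector_derivative_def] this]
      show ?thesis unfolding has_vector_derivative_def X_def o_def
        by (simp add: scaleR_sum_right mult_scaleR_left)
    qed
    have jid: "(\<Sum>l\<in>UNIV. P (\<gamma> t) $ l $ j * dP (\<gamma> t) l a b)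
        = ((\<chi> a l. dP (\<gamma> t) l a j) ** P (\<gamma> t) + P (\<gamma> t) ** transpose (\<chi> a l. dP (\<gamma> t) l a j)) $ a $ b" for a b
    proof -
      have "(\<Sum>l\<in>UNIV. P (\<gamma> t) $ l $ j * dP (\<gamma> t) l a b)
          = (\<Sum>l\<in>UNIV. dP (\<gamma> t) l a j * P (\<gamma> t) $ l $ b + P (\<gamma> t) $ a $ l * dP (\<gamma> t) l b j)"
        by (rule jacobi_flow_identity[OF skew[OF gM[OF t]] partial_skew[OF M(1) gM[OF t] Pd skew] jac[OF gM[OF t]]])
      then show ?thesis
        by (simp add: matrix_matrix_mult_def transpose_def sum.distrib)
    qed
    show "((\<lambda>t. P (\<gamma> t)) has_vector_derivative
          ((\<chi> a l. dP (\<gamma> t) l a j) ** P (\<gamma> t) + P (\<gamma> t) ** transpose (\<chi> a l. dP (\<gamma> t) l a j)))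
          (at t within {0..h})"
    proof (intro vec_has_vector_derivative)
      fix a b
      show "((\<lambda>t. P (\<gamma> t) $ a $ b) has_vector_derivative
          ((\<chi> a l. dP (\<gamma> t) l a j) ** P (\<gamma> t) + P (\<gamma> t) ** transpose (\<chi> a l. dP (\<gamma> t) l a j)) $ a $ b)
          (at t within {0..h})"
        using ent[of a b] unfolding jid .
    qed
  qed
qed



lemma sum_axis_mult': "(\<Sum>m\<in>UNIV. axis l 1 $ m * f m) = (f l :: 'a::semiring_1)"
proof -
  have "(\<Sum>m\<in>UNIV. axis l 1 $ m * f m) = (\<Sum>m\<in>UNIV. if m = l then f m else 0)"
    by (rule sum.cong) (auto simp: axis_def)
  then show ?thesis by simp
qed

lemma norm_axis': "norm (axis i x :: 'b::real_normed_vector^'n) = norm x"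
proof -
  have "norm (axis i x :: 'b^'n) = L2_set (\<lambda>k. norm ((axis i x :: 'b^'n) $ k)) UNIV"
    by (simp add: norm_vec_def)
  also have "\<dots> = L2_set (\<lambda>k. if k = i then norm x else 0) UNIV"
    by (rule L2_set_cong) (auto simp: axis_def)
  also have "\<dots> = sqrt (\<Sum>k\<in>UNIV. (if k = i then norm x else 0)^2)" by (simp add: L2_set_def)
  also have "(\<Sum>k\<in>UNIV. (if k = i then norm x else 0)^2) = (\<Sum>k\<in>UNIV. if k = i then (norm x)^2 else 0)"
    by (rule sum.cong) auto
  also have "\<dots> = (norm x)^2" by simp
  also have "sqrt ((norm x)^2) = norm x" by simp
  finally show ?thesis .
qed

lemma holo_partials_der:
  fixes f :: "complex^'n \<Rightarrow> complex"
  assumes "(f has_derivative f') (at x)" "\<And>c v. f' (c *s v) = c * f' v"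
  shows "(f has_derivative (\<lambda>v. \<Sum>l\<in>UNIV. v $ l * pd f x l)) (at x)"
    and "\<And>l. pd f x l = f' (axis l 1)"
proof -
  have pdl: "pd f x l = f' (axis l 1)" for l
    unfolding pd_def using frechet_derivative_at[OF assms(1)] by simp
  then show "\<And>l. pd f x l = f' (axis l 1)" .
  have lin: "linear f'" using assms(1) has_derivative_linear by blast
  have "f' v = (\<Sum>l\<in>UNIV. v $ l * pd f x l)" for v
  proof -
    have "f' v = f' (\<Sum>l\<in>UNIV. v $ l *s axis l 1)" using basis_expansion[of v] by simp
    also have "\<dots> = (\<Sum>l\<in>UNIV. f' (v $ l *s axis l 1))" by (rule linear_sum[OF lin])
    also have "\<dots> = (\<Sum>l\<in>UNIV. v $ l * pd f x l)" using assms(2) pdl by simp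
    finally show ?thesis .
  qed
  then have "f' = (\<lambda>v. \<Sum>l\<in>UNIV. v $ l * pd f x l)" by (rule ext)
  then show "(f has_derivative (\<lambda>v. \<Sum>l\<in>UNIV. v $ l * pd f x l)) (at x)" using assms(1) by simp
qed

lemma holo_line_deriv:
  fixes f :: "complex^'n \<Rightarrow> complex"
  assumes "(f has_derivative f') (at (z + axis l w))" "\<And>c v. f' (c *s v) = c * f' v"
  shows "((\<lambda>w. f (z + axis l w)) has_field_derivative f' (axis l 1)) (at w)"
proof -
  have lin: "bounded_linear (\<lambda>c::complex. axis l c :: complex^'n)"
  proof (rule bounded_linear_intro[where K=1])
    fix a b :: complex and r :: real
    show "axis l (a + b) = (axis l a :: complex^'n) + axis l b" by (simp add: axis_def vec_eq_iff)
    show "axis l (r *\<^sub>R a) = r *\<^sub>R (axis l a :: complex^'n)" by (simp add: axis_def vec_eq_iff)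
    show "norm (axis l a :: complex^'n) \<le> norm a * 1" by (simp add: norm_axis')
  qed
  have "((\<lambda>w. z + axis l w) has_derivative (\<lambda>c. axis l c)) (at w)"
  proof -
    have "((\<lambda>c. axis l c :: complex^'n) has_derivative (\<lambda>c. axis l c)) (at w)"
      using bounded_linear_imp_has_derivative[OF lin] .
    then show ?thesis using has_derivative_add[OF has_derivative_const[of z]] by simp
  qed
  from has_derivative_compose[OF this assms(1)]
  have "((\<lambda>w. f (z + axis l w)) has_derivative (\<lambda>c. f' (axis l c))) (at w)" by simp
  moreover have "(\<lambda>c. f' (axis l c)) = (*) (f' (axis l 1))"
  proof
    fix c
    have "axis l c = c *s (axis l 1 :: complex^'n)" by (simp add: axis_def vec_eq_iff)
    then show "f' (axis l c) = f' (axis l 1) * c" using assms(2)[of c "axis l 1"] by (simp add: mult.commute)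
  qed
  ultimately show ?thesis unfolding has_field_derivative_def by simp
qed


lemma holo_cauchy_rep:
  fixes f :: "complex^'n \<Rightarrow> complex"
  assumes r: "r > 0"
    and hol: "\<And>x. x \<in> cball z r \<Longrightarrow> \<exists>f'. (f has_derivative f') (at x) \<and> (\<forall>c v. f' (c *s v) = c * f' v)"
  shows "(\<lambda>u. f (z + axis l u) / u^2) contour_integrable_on (circlepath 0 r)"
    and "pd f z l = 1 / (2 * of_real pi * \<i>) * contour_integral (circlepath 0 r) (\<lambda>u. f (z + axis l u) / u^2)"
proof -
  define g where "g = (\<lambda>w. f (z + axis l w))"
  have gd: "\<exists>D. (g has_field_derivative D) (at w)" if "w \<in> cball 0 r" for w
  proof -
    have "z + axis l w \<in> cball z r" using that by (simp add: dist_norm norm_axis')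
    then obtain f' where "(f has_derivative f') (at (z + axis l w))" "\<And>c v. f' (c *s v) = c * f' v"
      using hol by blast
    from holo_line_deriv[OF this] show ?thesis unfolding g_def by blast
  qed
  have gc: "continuous_on (cball 0 r) g"
    by (rule continuous_at_imp_continuous_on) (use gd DERIV_isCont in blast)
  have gh: "g holomorphic_on ball 0 r"
    unfolding holomorphic_on_def field_differentiable_def
    using gd by (meson ball_subset_cball has_field_derivative_at_within subsetD)
  have c0: "(0::complex) \<in> ball 0 r" using r by simp
  note C = Cauchy_derivative_integral_circlepath[OF gc gh c0]
  show "(\<lambda>u. f (z + axis l u) / u^2) contour_integrable_on (circlepath 0 r)"
    using C(1) unfolding g_def by simp
  obtain f' where f': "(f has_derivative f') (at z)" "\<And>c v. f' (c *s v) = c * f' v"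
    using hol[of z] r by auto
  have "(g has_field_derivative f' (axis l 1)) (at 0)"
  proof -
    have eq: "z + axis l 0 = z" by (simp add: axis_def vec_eq_iff)
    show ?thesis unfolding g_def using holo_line_deriv[of f f' z l 0, unfolded eq] f' by blast
  qed
  moreover have "pd f z l = f' (axis l 1)" using holo_partials_der(2)[OF f'] .
  ultimately show "pd f z l = 1 / (2 * of_real pi * \<i>) * contour_integral (circlepath 0 r) (\<lambda>u. f (z + axis l u) / u^2)"
    using DERIV_unique C(2) unfolding g_def by fastforce
qed


lemma holo_partial_cont:
  fixes f :: "complex^'n \<Rightarrow> complex"
  assumes U: "open U"
    and hol: "\<And>x. x \<in> U \<Longrightarrow> \<exists>f'. (f has_derivative f') (at x) \<and> (\<forall>c v. f' (c *s v) = c * f' v)"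
  shows "continuous_on U (\<lambda>x. pd f x l)"
proof (rule continuous_at_imp_continuous_on, rule ballI)
  fix x0 assume x0: "x0 \<in> U"
  obtain e0 where e0: "e0 > 0" "cball x0 e0 \<subseteq> U" using U x0 open_contains_cball by blast
  define r where "r = e0 / 2"
  have r: "r > 0" unfolding r_def using e0 by simp
  define K where "K = cball x0 (2 * r)"
  have KU: "K \<subseteq> U" unfolding K_def r_def using e0 by simp
  have fc: "continuous_on K f"
  proof (rule continuous_at_imp_continuous_on, rule ballI)
    fix x assume "x \<in> K"
    then obtain f' where "(f has_derivative f') (at x)" using hol KU by blast
    then show "isCont f x" by (rule has_derivative_continuous)
  qed
  have uc: "uniformly_continuous_on K f"
    by (rule compact_uniformly_continuous[OF fc]) (simp add: K_def)
  have rep: "(\<lambda>u. f (z + axis l u) / u^2) contour_integrable_on (circlepath 0 r) \<and>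
             pd f z l = 1 / (2 * of_real pi * \<i>) * contour_integral (circlepath 0 r) (\<lambda>u. f (z + axis l u) / u^2)"
    if "dist z x0 < r" for z
  proof -
    have "cball z r \<subseteq> U"
    proof
      fix y assume "y \<in> cball z r"
      then have "dist x0 y \<le> dist x0 z + dist z y" by (simp add: dist_triangle)
      then have "dist x0 y \<le> 2 * r" using \<open>y \<in> cball z r\<close> that by (simp add: dist_commute)
      then show "y \<in> U" using KU K_def by auto
    qed
    then show ?thesis using holo_cauchy_rep[OF r, of z f l] hol by blast
  qed
  show "isCont (\<lambda>x. pd f x l) x0"
    unfolding continuous_at_eps_delta
  proof (intro allI impI)
    fix e :: real assume e: "e > 0"
    define \<eta> where "\<eta> = e * r / 2"
    have \<eta>: "\<eta> > 0" unfolding \<eta>_def using e r by simp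
    obtain \<delta> where \<delta>: "\<delta> > 0" "\<And>p q. p \<in> K \<Longrightarrow> q \<in> K \<Longrightarrow> dist p q < \<delta> \<Longrightarrow> dist (f p) (f q) < \<eta>"
      using uc \<eta> unfolding uniformly_continuous_on_def by metis
    show "\<exists>d>0. \<forall>z. dist z x0 < d \<longrightarrow> dist (pd f z l) (pd f x0 l) < e"
    proof (intro exI[of _ "min r \<delta>"] conjI allI impI)
      show "min r \<delta> > 0" using r \<delta> by simp
      fix z assume z: "dist z x0 < min r \<delta>"
      define gz where "gz = (\<lambda>u. f (z + axis l u) / u^2)"
      define g0 where "g0 = (\<lambda>u. f (x0 + axis l u) / u^2)"
      have rz: "gz contour_integrable_on (circlepath 0 r)"
        "pd f z l = 1 / (2 * of_real pi * \<i>) * contour_integral (circlepath 0 r) gz"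
        using rep[of z] z unfolding gz_def by auto
      have r0: "g0 contour_integrable_on (circlepath 0 r)"
        "pd f x0 l = 1 / (2 * of_real pi * \<i>) * contour_integral (circlepath 0 r) g0"
        using rep[of x0] r unfolding g0_def by auto
      have hi: "((\<lambda>u. gz u - g0 u) has_contour_integral
                 (contour_integral (circlepath 0 r) gz - contour_integral (circlepath 0 r) g0)) (circlepath 0 r)"
        by (intro has_contour_integral_diff has_contour_integral_integral rz(1) r0(1))
      have bnd: "norm (gz u - g0 u) \<le> \<eta> / r^2" if u: "norm (u - 0) = r" for u
      proof -
        have p1: "z + axis l u \<in> K" unfolding K_def
        proof -
          have "dist x0 (z + axis l u) \<le> dist x0 z + dist z (z + axis l u)" by (rule dist_triangle)
          also have "\<dots> \<le> r + r" using z u by (simp add: dist_norm norm_axis' norm_minus_commute)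
          finally show "z + axis l u \<in> cball x0 (2 * r)" by simp
        qed
        have p2: "x0 + axis l u \<in> K" unfolding K_def using u r by (simp add: dist_norm norm_axis')
        have "dist (z + axis l u) (x0 + axis l u) < \<delta>" using z by (simp add: dist_norm)
        then have "norm (f (z + axis l u) - f (x0 + axis l u)) < \<eta>"
          using \<delta>(2)[OF p1 p2] by (simp add: dist_norm)
        moreover have "gz u - g0 u = (f (z + axis l u) - f (x0 + axis l u)) / u^2"
          unfolding gz_def g0_def by (simp add: diff_divide_distrib)
        moreover have "norm (u^2) = r^2" using u by (simp add: norm_power)
        ultimately show ?thesis using r by (simp add: norm_divide divide_right_mono)
      qed
      have "norm (contour_integral (circlepath 0 r) gz - contour_integral (circlepath 0 r) g0) \<le> \<eta> / r^2 * (2 * pi * r)"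
        by (rule has_contour_integral_bound_circlepath[OF hi _ r bnd]) (use \<eta> r in simp)
      then have A: "norm (contour_integral (circlepath 0 r) gz - contour_integral (circlepath 0 r) g0) / (2 * pi)
           \<le> (\<eta> / r^2 * (2 * pi * r)) / (2 * pi)"
        by (rule divide_right_mono) simp
      have N: "norm (pd f z l - pd f x0 l) = norm (contour_integral (circlepath 0 r) gz - contour_integral (circlepath 0 r) g0) / (2 * pi)"
        unfolding rz(2) r0(2) right_diff_distrib[symmetric]
        by (simp add: norm_mult norm_divide)
      have "norm (pd f z l - pd f x0 l) \<le> (\<eta> / r^2 * (2 * pi * r)) / (2 * pi)"
        using A N by simp
      also have "\<dots> = e / 2" unfolding \<eta>_def using r by (simp add: field_simps power2_eq_square)
      finally show "dist (pd f z l) (pd f x0 l) < e" using e by (simp add: dist_norm)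
    qed
  qed
qed



lemma pd_from_der:
  fixes g :: "'a::real_normed_field^'n \<Rightarrow> 'a"
  assumes "(g has_derivative (\<lambda>v. \<Sum>l\<in>UNIV. v $ l * d l)) (at x)"
  shows "pd g x l = d l"
proof -
  have "frechet_derivative g (at x) = (\<lambda>v. \<Sum>l\<in>UNIV. v $ l * d l)"
    using frechet_derivative_at[OF assms] by (rule sym)
  then show ?thesis unfolding pd_def by (simp add: sum_axis_mult')
qed

lemma smooth_partials:
  fixes f :: "real^'n \<Rightarrow> real"
  assumes U: "open U" and sm: "smooth_on U f"
  shows "\<And>x. x \<in> U \<Longrightarrow> (f has_derivative (\<lambda>v. \<Sum>l\<in>UNIV. v $ l * pd f x l)) (at x)"
    and "continuous_on U (\<lambda>x. pd f x l)"
proof -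
  obtain D :: "'n list \<Rightarrow> real^'n \<Rightarrow> real" where D0: "\<And>x. x \<in> U \<Longrightarrow> D [] x = f x"
    and Dd: "\<And>ds x. x \<in> U \<Longrightarrow> (D ds has_derivative (\<lambda>v. \<Sum>i\<in>UNIV. v $ i * D (i # ds) x)) (at x)"
    using sm unfolding smooth_on_def by blast
  have fd: "(f has_derivative (\<lambda>v. \<Sum>i\<in>UNIV. v $ i * D [i] x)) (at x)" if x: "x \<in> U" for x
    by (rule has_derivative_transform_within_open[OF Dd[OF x] U x]) (simp add: D0)
  have pdD: "pd f x l = D [l] x" if "x \<in> U" for x l using pd_from_der[OF fd[OF that]] .
  show "(f has_derivative (\<lambda>v. \<Sum>l\<in>UNIV. v $ l * pd f x l)) (at x)" if "x \<in> U" for x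
    using fd[OF that] pdD[OF that] by simp
  have "continuous_on U (D [l])"
  proof (rule continuous_at_imp_continuous_on, rule ballI)
    fix x assume "x \<in> U"
    show "isCont (D [l]) x" by (rule has_derivative_continuous[OF Dd[OF \<open>x \<in> U\<close>]])
  qed
  then show "continuous_on U (\<lambda>x. pd f x l)"
    by (rule continuous_on_eq) (simp add: pdD)
qed


lemma holo_partials:
  fixes f :: "complex^'n \<Rightarrow> complex"
  assumes U: "open U" and hol: "holo_on U f"
  shows "\<And>x. x \<in> U \<Longrightarrow> (f has_derivative (\<lambda>v. \<Sum>l\<in>UNIV. v $ l * pd f x l)) (at x)"
    and "continuous_on U (\<lambda>x. pd f x l)"
proof -
  show "(f has_derivative (\<lambda>v. \<Sum>l\<in>UNIV. v $ l * pd f x l)) (at x)" if "x \<in> U" for x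
  proof -
    have "\<exists>f'. (f has_derivative f') (at x) \<and> (\<forall>c v. f' (c *s v) = c * f' v)"
      using hol that unfolding holo_on_def by blast
    then obtain f' where "(f has_derivative f') (at x)" "\<And>c v. f' (c *s v) = c * f' v"
      by blast
    then show ?thesis by (rule holo_partials_der(1))
  qed
  show "continuous_on U (\<lambda>x. pd f x l)"
  proof (rule holo_partial_cont[OF U])
    fix x assume "x \<in> U"
    then show "\<exists>f'. (f has_derivative f') (at x) \<and> (\<forall>c v. f' (c *s v) = c * f' v)"
      using hol unfolding holo_on_def by blast
  qed
qed



definition jexpr :: "'a::comm_ring^'n^'n \<Rightarrow> ('n \<Rightarrow> 'n \<Rightarrow> 'n \<Rightarrow> 'a) \<Rightarrow> 'n \<Rightarrow> 'n \<Rightarrow> 'n \<Rightarrow> 'a" where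
  "jexpr P d i j k = (\<Sum>l\<in>UNIV. P $ i $ l * d l j k + P $ j $ l * d l k i + P $ k $ l * d l i j)"

lemma jexpr_comb:
  fixes A B :: "'a::comm_ring^'n^'n"
  shows "jexpr (\<chi> a b. A $ a $ b + s * B $ a $ b) (\<lambda>l a b. dA l a b + s * dB l a b) i j k
     = jexpr A dA i j k + s * (jexpr A dB i j k + jexpr B dA i j k) + s * s * jexpr B dB i j k"
  unfolding jexpr_def
  by (simp add: algebra_simps sum.distrib sum_distrib_left)

lemma jexpr_pencil:
  fixes A B :: "'a::comm_ring_1^'n^'n"
  assumes "jexpr A dA i j k = 0" "jexpr B dB i j k = 0"
    and "jexpr (\<chi> a b. A $ a $ b + 1 * B $ a $ b) (\<lambda>l a b. dA l a b + 1 * dB l a b) i j k = 0"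
  shows "jexpr (\<chi> a b. A $ a $ b + (- c) * B $ a $ b) (\<lambda>l a b. dA l a b + (- c) * dB l a b) i j k = 0"
  using assms unfolding jexpr_comb by simp





lemma deriv_const_zero:
  fixes \<gamma> :: "real \<Rightarrow> 'a::real_normed_field^'n" and lam :: "'a^'n \<Rightarrow> 'a" and X0 :: "'a^'n"
  assumes h: "h > 0"
    and gd: "(\<gamma> has_vector_derivative X0) (at 0 within {0..h})"
    and ld: "(lam has_derivative (\<lambda>v. \<Sum>l\<in>UNIV. v $ l * dl l)) (at (\<gamma> 0))"
    and const: "\<And>t. t \<in> {0..h} \<Longrightarrow> lam (\<gamma> t) = lam (\<gamma> 0)"
  shows "(\<Sum>l\<in>UNIV. X0 $ l * dl l) = 0"
proof -
  have "((\<lambda>y. lam y) has_derivative (\<lambda>v. \<Sum>l\<in>UNIV. v $ l * dl l)) (at (\<gamma> 0) within \<gamma> ` {0..h})"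
    by (rule has_derivative_at_withinI[OF ld])
  from diff_chain_within[OF gd[unfolded has_vector_derivative_def] this]
  have d1: "((\<lambda>t. lam (\<gamma> t)) has_vector_derivative (\<Sum>l\<in>UNIV. X0 $ l * dl l)) (at 0 within {0..h})"
    unfolding has_vector_derivative_def o_def
    by (simp add: scaleR_sum_right mult_scaleR_left)
  have d2: "((\<lambda>t. lam (\<gamma> t)) has_vector_derivative 0) (at 0 within {0..h})"
  proof (rule has_vector_derivative_transform[where f="\<lambda>t. lam (\<gamma> 0)"])
    show "0 \<in> {0..h}" using h by simp
    show "\<And>x. x \<in> {0..h} \<Longrightarrow> lam (\<gamma> x) = lam (\<gamma> 0)" by (rule const)
  qed simp
  show ?thesis
    using vector_derivative_unique_within_closed_interval[of 0 h 0, OF h _ d1[unfolded cbox_interval[symmetric]] d2[unfolded cbox_interval[symmetric]]] h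
    by simp
qed

lemma final_conv:
  fixes P :: "'a::comm_ring^'n^'n"
  assumes skew: "\<And>a b. P $ a $ b = - P $ b $ a"
    and col: "\<And>j. (\<Sum>l\<in>UNIV. P $ l $ j * d l) = 0"
  shows "(\<chi> i. \<Sum>j\<in>UNIV. P $ i $ j * d j) = 0"
proof -
  have "(\<Sum>j\<in>UNIV. P $ i $ j * d j) = - (\<Sum>j\<in>UNIV. P $ j $ i * d j)" for i
    by (subst skew) (simp add: sum_negf)
  then show ?thesis using col by (simp add: vec_eq_iff)
qed

definition cplxM :: "real^'n^'m \<Rightarrow> complex^'n^'m" where "cplxM = cplx"

lemma cplx_bounded_linear: "bounded_linear (cplx :: real^'n^'m \<Rightarrow> complex^'n^'m)"
proof (rule bounded_linear_intro[where K=1])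
  fix A B :: "real^'n^'m" and r :: real
  show "cplx (A + B) = cplx A + cplx B" by (simp add: cplx_def vec_eq_iff)
  have e: "complex_of_real (r * a) = r *\<^sub>R complex_of_real a" for a
    by (simp add: scaleR_conv_of_real)
  have "(cplx (r *\<^sub>R A)) $ i $ j = (r *\<^sub>R cplx A) $ i $ j" for i j
  proof -
    have "(cplx (r *\<^sub>R A)) $ i $ j = complex_of_real (r * A $ i $ j)" by (simp add: cplx_def)
    also have "\<dots> = r *\<^sub>R complex_of_real (A $ i $ j)" by (simp add: scaleR_conv_of_real)
    also have "\<dots> = (r *\<^sub>R cplx A) $ i $ j" by (simp add: cplx_def)
    finally show ?thesis .
  qed
  then show "cplx (r *\<^sub>R A) = r *\<^sub>R cplx A" by (simp add: vec_eq_iff)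
  have "norm (cplx A) = norm A"
    unfolding cplx_def norm_vec_def by simp
  then show "norm (cplx A) \<le> norm A * 1" by simp
qed

lemma cplx_mult: "cplx (A ** B) = cplx A ** cplx (B :: real^'p^'n)"
  for A :: "real^'n^'m"
  by (simp add: cplx_def matrix_matrix_mult_def vec_eq_iff)

lemma cplx_add: "cplx (A + B) = cplx A + cplx (B :: real^'n^'m)"
  by (simp add: cplx_def vec_eq_iff)

lemma cplx_transpose: "cplx (transpose A) = transpose (cplx (A :: real^'n^'m))"
  by (simp add: cplx_def transpose_def vec_eq_iff)


lemma real_case:
  fixes M :: "(real^'n) set" and A B :: "real^'n \<Rightarrow> real^'n^'n" and lam :: "real^'n \<Rightarrow> real"
    and U :: "((real^'n) \<times> complex) set"
  assumes M: "open M"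
    and smA: "\<And>i j. smooth_on M (\<lambda>x. A x $ i $ j)" and smB: "\<And>i j. smooth_on M (\<lambda>x. B x $ i $ j)"
    and pp: "poisson_pencil_on M A B" and sml: "smooth_on M lam"
    and eig: "\<And>x. x \<in> M \<Longrightarrow> pencil_eigenvalue (cplx (A x)) (cplx (B x)) (complex_of_real (lam x))"
    and rk: "\<And>x y. x \<in> M \<Longrightarrow> y \<in> M \<Longrightarrow> pencil_rank (cplx (A x)) (cplx (B x)) = pencil_rank (cplx (A y)) (cplx (B y))"
    and U: "open U" and Ug: "\<And>x. x \<in> M \<Longrightarrow> (x, complex_of_real (lam x)) \<in> U"
    and iso: "\<And>x \<mu>. x \<in> M \<Longrightarrow> (x, \<mu>) \<in> U \<Longrightarrow> \<mu> \<noteq> complex_of_real (lam x) \<Longrightarrow>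
                 \<not> pencil_eigenvalue (cplx (A x)) (cplx (B x)) \<mu>"
    and x0: "x0 \<in> M"
  shows "(\<chi> i. \<Sum>j\<in>UNIV. (A x0 $ i $ j - lam x0 * B x0 $ i $ j) * pd lam x0 j) = 0"
proof -
  define c where "c = lam x0"
  define P where "P = (\<lambda>y. \<chi> a b. A y $ a $ b + (- c) * B y $ a $ b)"
  define dA where "dA = (\<lambda>x l a b. pd (\<lambda>y. A y $ a $ b) x l)"
  define dB where "dB = (\<lambda>x l a b. pd (\<lambda>y. B y $ a $ b) x l)"
  define dP where "dP = (\<lambda>x l a b. dA x l a b + (- c) * dB x l a b)"
  have Ad: "((\<lambda>y. A y $ a $ b) has_derivative (\<lambda>v. \<Sum>l\<in>UNIV. v $ l * dA x l a b)) (at x)" if "x \<in> M" for x a b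
    unfolding dA_def by (rule smooth_partials(1)[OF M smA that])
  have Bd: "((\<lambda>y. B y $ a $ b) has_derivative (\<lambda>v. \<Sum>l\<in>UNIV. v $ l * dB x l a b)) (at x)" if "x \<in> M" for x a b
    unfolding dB_def by (rule smooth_partials(1)[OF M smB that])
  have Pd: "((\<lambda>y. P y $ a $ b) has_derivative (\<lambda>v. \<Sum>l\<in>UNIV. v $ l * dP x l a b)) (at x)" if x: "x \<in> M" for x a b
  proof -
    have "((\<lambda>y. A y $ a $ b + (- c) * B y $ a $ b) has_derivative
           (\<lambda>v. (\<Sum>l\<in>UNIV. v $ l * dA x l a b) + (- c) * (\<Sum>l\<in>UNIV. v $ l * dB x l a b))) (at x)"
      by (intro has_derivative_add has_derivative_mult_right Ad[OF x] Bd[OF x])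
    moreover have "(\<lambda>v. (\<Sum>l\<in>UNIV. v $ l * dA x l a b) + (- c) * (\<Sum>l\<in>UNIV. v $ l * dB x l a b))
                 = (\<lambda>v. \<Sum>l\<in>UNIV. v $ l * dP x l a b)"
      unfolding dP_def by (simp add: algebra_simps sum.distrib sum_distrib_left sum_subtractf sum_negf)
    ultimately show ?thesis unfolding P_def by simp
  qed
  have dPc: "continuous_on M (\<lambda>x. dP x l a b)" for l a b
    unfolding dP_def dA_def dB_def
    by (intro continuous_intros smooth_partials(2)[OF M smA] smooth_partials(2)[OF M smB])
  have pA: "poisson_on M A" and pB: "poisson_on M B" and pAB: "poisson_on M (\<lambda>x. A x + B x)"
    using pp unfolding poisson_pencil_on_def by auto
  have skA: "A x $ a $ b = - A x $ b $ a" if "x \<in> M" for x a b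
    using pA that unfolding poisson_on_def by blast
  have skB: "B x $ a $ b = - B x $ b $ a" if "x \<in> M" for x a b
    using pB that unfolding poisson_on_def by blast
  have Pskew: "P x $ a $ b = - P x $ b $ a" if x: "x \<in> M" for x a b
    using skA[OF x, of a b] skB[OF x, of a b] by (simp add: P_def)
  have pdAB: "pd (\<lambda>y. (A y + B y) $ a $ b) x l = dA x l a b + dB x l a b" if x: "x \<in> M" for x a b l
  proof (rule pd_from_der)
    have "((\<lambda>y. A y $ a $ b + B y $ a $ b) has_derivative
           (\<lambda>v. (\<Sum>l\<in>UNIV. v $ l * dA x l a b) + (\<Sum>l\<in>UNIV. v $ l * dB x l a b))) (at x)"
      by (intro has_derivative_add Ad[OF x] Bd[OF x])
    then show "((\<lambda>y. (A y + B y) $ a $ b) has_derivative (\<lambda>v. \<Sum>l\<in>UNIV. v $ l * (dA x l a b + dB x l a b))) (at x)"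
      by (simp add: algebra_simps sum.distrib)
  qed
  have jac: "(\<Sum>l\<in>UNIV. P x $ a $ l * dP x l b e + P x $ b $ l * dP x l e a + P x $ e $ l * dP x l a b) = 0"
    if x: "x \<in> M" for x a b e
  proof -
    have jA: "jexpr (A x) (dA x) a b e = 0"
      using pA x unfolding poisson_on_def jexpr_def dA_def by blast
    have jB: "jexpr (B x) (dB x) a b e = 0"
      using pB x unfolding poisson_on_def jexpr_def dB_def by blast
    have "(\<Sum>l\<in>UNIV. (A x + B x) $ a $ l * pd (\<lambda>y. (A y + B y) $ b $ e) x l
                   + (A x + B x) $ b $ l * pd (\<lambda>y. (A y + B y) $ e $ a) x l
                   + (A x + B x) $ e $ l * pd (\<lambda>y. (A y + B y) $ a $ b) x l) = 0"
      using pAB x unfolding poisson_on_def by blast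
    then have jAB: "jexpr (\<chi> a b. A x $ a $ b + 1 * B x $ a $ b) (\<lambda>l a b. dA x l a b + 1 * dB x l a b) a b e = 0"
      unfolding jexpr_def using pdAB[OF x] by simp
    from jexpr_pencil[OF jA jB jAB, of c]
    show ?thesis unfolding jexpr_def P_def dP_def by simp
  qed
  have pm: "(\<chi> i j. cplx (A y) $ i $ j - complex_of_real c * cplx (B y) $ i $ j) = cplx (P y)" for y
    by (simp add: cplx_def P_def vec_eq_iff)
  have eig0: "rank (cplx (P x0)) < pencil_rank (cplx (A x0)) (cplx (B x0))"
    using eig[OF x0] unfolding pencil_eigenvalue_def c_def[symmetric] pm .
  obtain e where e: "e > 0" "\<And>x. dist x x0 < e \<Longrightarrow> (x, complex_of_real c) \<in> U"
  proof -
    obtain e where "e > 0" "ball (x0, complex_of_real c) e \<subseteq> U"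
      using U Ug[OF x0] open_contains_ball unfolding c_def by blast
    moreover have "dist (x, complex_of_real c) (x0, complex_of_real c) = dist x x0" for x
      by (simp add: dist_Pair_Pair)
    ultimately show ?thesis using that by (metis mem_ball dist_commute subsetD)
  qed
  have ld: "(lam has_derivative (\<lambda>v. \<Sum>l\<in>UNIV. v $ l * pd lam x0 l)) (at x0)"
    by (rule smooth_partials(1)[OF M sml x0])
  have col: "(\<Sum>l\<in>UNIV. P x0 $ l $ j * pd lam x0 l) = 0" for j
  proof -
    obtain h \<gamma> where h: "h > 0" and g0: "\<gamma> 0 = x0"
      and Mgc: "continuous_on {0..h} (\<lambda>t. \<chi> a l. dP (\<gamma> t) l a j)"
      and gM: "\<And>t. t \<in> {0..h} \<Longrightarrow> \<gamma> t \<in> M"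
      and gD: "\<And>t. t \<in> {0..h} \<Longrightarrow> (\<gamma> has_vector_derivative (\<chi> a. P (\<gamma> t) $ a $ j)) (at t within {0..h})"
      and PD: "\<And>t. t \<in> {0..h} \<Longrightarrow> ((\<lambda>t. P (\<gamma> t)) has_vector_derivative
          ((\<chi> a l. dP (\<gamma> t) l a j) ** P (\<gamma> t) + P (\<gamma> t) ** transpose (\<chi> a l. dP (\<gamma> t) l a j)))
          (at t within {0..h})"
      using flow_lemma[OF M x0 Pd dPc Pskew jac, of j] by blast
    interpret CL: bounded_linear "cplx :: real^'n^'n \<Rightarrow> complex^'n^'n" by (rule cplx_bounded_linear)
    define Mc where "Mc = (\<lambda>t. cplx (\<chi> a l. dP (\<gamma> t) l a j))"
    define Pc where "Pc = (\<lambda>t. cplx (P (\<gamma> t)))"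
    have Mcc: "continuous_on {0..h} Mc" unfolding Mc_def by (rule CL.continuous_on[OF Mgc])
    have Pcd: "(Pc has_vector_derivative (Mc t ** Pc t + Pc t ** transpose (Mc t))) (at t within {0..h})"
      if t: "t \<in> {0..h}" for t
      using CL.has_vector_derivative[OF PD[OF t]] unfolding Pc_def Mc_def
      by (simp add: cplx_add cplx_mult cplx_transpose)
    obtain h2 where h2: "h2 > 0" and rk2: "\<And>t. t \<in> {0..h2} \<Longrightarrow> rank (Pc t) \<le> rank (Pc 0)"
      using rank_nonincreasing[OF h Mcc Pcd] by blast
    have "continuous (at 0 within {0..h}) \<gamma>"
      using gD[of 0] h by (auto intro: has_vector_derivative_continuous)
    then obtain d where d: "d > 0" "\<And>t. t \<in> {0..h} \<Longrightarrow> dist t 0 < d \<Longrightarrow> dist (\<gamma> t) (\<gamma> 0) < e"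
      using e(1) unfolding continuous_within_eps_delta by blast
    define h4 where "h4 = min h (min h2 (d/2))"
    have h4: "h4 > 0" "h4 \<le> h" unfolding h4_def using h h2 d by auto
    have const: "lam (\<gamma> t) = lam (\<gamma> 0)" if t: "t \<in> {0..h4}" for t
    proof (rule ccontr)
      assume ne: "lam (\<gamma> t) \<noteq> lam (\<gamma> 0)"
      have th: "t \<in> {0..h}" and th2: "t \<in> {0..h2}" and td: "dist t 0 < d"
        using t d unfolding h4_def by auto
      have gtM: "\<gamma> t \<in> M" by (rule gM[OF th])
      have "rank (cplx (P (\<gamma> t))) \<le> rank (cplx (P x0))" using rk2[OF th2] g0 unfolding Pc_def by simp
      also have "\<dots> < pencil_rank (cplx (A x0)) (cplx (B x0))" by (rule eig0)
      also have "\<dots> = pencil_rank (cplx (A (\<gamma> t))) (cplx (B (\<gamma> t)))" by (rule rk[OF x0 gtM])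
      finally have "pencil_eigenvalue (cplx (A (\<gamma> t))) (cplx (B (\<gamma> t))) (complex_of_real c)"
        unfolding pencil_eigenvalue_def pm .
      moreover have "(\<gamma> t, complex_of_real c) \<in> U" using e(2) d(2)[OF th td] g0 by simp
      moreover have "complex_of_real c \<noteq> complex_of_real (lam (\<gamma> t))"
        using ne g0 unfolding c_def by simp
      ultimately show False using iso[OF gtM] by blast
    qed
    have gD0: "(\<gamma> has_vector_derivative (\<chi> a. P (\<gamma> 0) $ a $ j)) (at 0 within {0..h4})"
      by (rule has_vector_derivative_within_subset[OF gD]) (use h4 in auto)
    have ld': "(lam has_derivative (\<lambda>v. \<Sum>l\<in>UNIV. v $ l * pd lam x0 l)) (at (\<gamma> 0))"
      using ld g0 by simp
    from deriv_const_zero[OF h4(1) gD0 ld' const]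
    show ?thesis using g0 by simp
  qed
  have "(\<chi> i. \<Sum>j\<in>UNIV. P x0 $ i $ j * pd lam x0 j) = 0"
    by (rule final_conv[OF Pskew[OF x0] col])
  then show ?thesis unfolding P_def c_def by simp
qed

lemma complex_case:
  fixes M :: "(complex^'n) set" and A B :: "complex^'n \<Rightarrow> complex^'n^'n" and lam :: "complex^'n \<Rightarrow> complex"
    and U :: "((complex^'n) \<times> complex) set"
  assumes M: "open M"
    and smA: "\<And>i j. holo_on M (\<lambda>x. A x $ i $ j)" and smB: "\<And>i j. holo_on M (\<lambda>x. B x $ i $ j)"
    and pp: "poisson_pencil_on M A B" and sml: "holo_on M lam"
    and eig: "\<And>x. x \<in> M \<Longrightarrow> pencil_eigenvalue (A x) (B x) (lam x)"
    and rk: "\<And>x y. x \<in> M \<Longrightarrow> y \<in> M \<Longrightarrow> pencil_rank (A x) (B x) = pencil_rank (A y) (B y)"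
    and U: "open U" and Ug: "\<And>x. x \<in> M \<Longrightarrow> (x, lam x) \<in> U"
    and iso: "\<And>x \<mu>. x \<in> M \<Longrightarrow> (x, \<mu>) \<in> U \<Longrightarrow> \<mu> \<noteq> lam x \<Longrightarrow>
                 \<not> pencil_eigenvalue (A x) (B x) \<mu>"
    and x0: "x0 \<in> M"
  shows "(\<chi> i. \<Sum>j\<in>UNIV. (A x0 $ i $ j - lam x0 * B x0 $ i $ j) * pd lam x0 j) = 0"
proof -
  define c where "c = lam x0"
  define P where "P = (\<lambda>y. \<chi> a b. A y $ a $ b + (- c) * B y $ a $ b)"
  define dA where "dA = (\<lambda>x l a b. pd (\<lambda>y. A y $ a $ b) x l)"
  define dB where "dB = (\<lambda>x l a b. pd (\<lambda>y. B y $ a $ b) x l)"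
  define dP where "dP = (\<lambda>x l a b. dA x l a b + (- c) * dB x l a b)"
  have Ad: "((\<lambda>y. A y $ a $ b) has_derivative (\<lambda>v. \<Sum>l\<in>UNIV. v $ l * dA x l a b)) (at x)" if "x \<in> M" for x a b
    unfolding dA_def by (rule holo_partials(1)[OF M smA that])
  have Bd: "((\<lambda>y. B y $ a $ b) has_derivative (\<lambda>v. \<Sum>l\<in>UNIV. v $ l * dB x l a b)) (at x)" if "x \<in> M" for x a b
    unfolding dB_def by (rule holo_partials(1)[OF M smB that])
  have Pd: "((\<lambda>y. P y $ a $ b) has_derivative (\<lambda>v. \<Sum>l\<in>UNIV. v $ l * dP x l a b)) (at x)" if x: "x \<in> M" for x a b
  proof -
    have "((\<lambda>y. A y $ a $ b + (- c) * B y $ a $ b) has_derivative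
           (\<lambda>v. (\<Sum>l\<in>UNIV. v $ l * dA x l a b) + (- c) * (\<Sum>l\<in>UNIV. v $ l * dB x l a b))) (at x)"
      by (intro has_derivative_add has_derivative_mult_right Ad[OF x] Bd[OF x])
    moreover have "(\<lambda>v. (\<Sum>l\<in>UNIV. v $ l * dA x l a b) + (- c) * (\<Sum>l\<in>UNIV. v $ l * dB x l a b))
                 = (\<lambda>v. \<Sum>l\<in>UNIV. v $ l * dP x l a b)"
      unfolding dP_def by (simp add: algebra_simps sum.distrib sum_distrib_left sum_subtractf sum_negf)
    ultimately show ?thesis unfolding P_def by simp
  qed
  have dPc: "continuous_on M (\<lambda>x. dP x l a b)" for l a b
    unfolding dP_def dA_def dB_def
    by (intro continuous_intros holo_partials(2)[OF M smA] holo_partials(2)[OF M smB])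
  have pA: "poisson_on M A" and pB: "poisson_on M B" and pAB: "poisson_on M (\<lambda>x. A x + B x)"
    using pp unfolding poisson_pencil_on_def by auto
  have skA: "A x $ a $ b = - A x $ b $ a" if "x \<in> M" for x a b
    using pA that unfolding poisson_on_def by blast
  have skB: "B x $ a $ b = - B x $ b $ a" if "x \<in> M" for x a b
    using pB that unfolding poisson_on_def by blast
  have Pskew: "P x $ a $ b = - P x $ b $ a" if x: "x \<in> M" for x a b
    using skA[OF x, of a b] skB[OF x, of a b] by (simp add: P_def)
  have pdAB: "pd (\<lambda>y. (A y + B y) $ a $ b) x l = dA x l a b + dB x l a b" if x: "x \<in> M" for x a b l
  proof (rule pd_from_der)
    have "((\<lambda>y. A y $ a $ b + B y $ a $ b) has_derivative
           (\<lambda>v. (\<Sum>l\<in>UNIV. v $ l * dA x l a b) + (\<Sum>l\<in>UNIV. v $ l * dB x l a b))) (at x)"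
      by (intro has_derivative_add Ad[OF x] Bd[OF x])
    then show "((\<lambda>y. (A y + B y) $ a $ b) has_derivative (\<lambda>v. \<Sum>l\<in>UNIV. v $ l * (dA x l a b + dB x l a b))) (at x)"
      by (simp add: algebra_simps sum.distrib)
  qed
  have jac: "(\<Sum>l\<in>UNIV. P x $ a $ l * dP x l b e + P x $ b $ l * dP x l e a + P x $ e $ l * dP x l a b) = 0"
    if x: "x \<in> M" for x a b e
  proof -
    have jA: "jexpr (A x) (dA x) a b e = 0"
      using pA x unfolding poisson_on_def jexpr_def dA_def by blast
    have jB: "jexpr (B x) (dB x) a b e = 0"
      using pB x unfolding poisson_on_def jexpr_def dB_def by blast
    have "(\<Sum>l\<in>UNIV. (A x + B x) $ a $ l * pd (\<lambda>y. (A y + B y) $ b $ e) x l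
                   + (A x + B x) $ b $ l * pd (\<lambda>y. (A y + B y) $ e $ a) x l
                   + (A x + B x) $ e $ l * pd (\<lambda>y. (A y + B y) $ a $ b) x l) = 0"
      using pAB x unfolding poisson_on_def by blast
    then have jAB: "jexpr (\<chi> a b. A x $ a $ b + 1 * B x $ a $ b) (\<lambda>l a b. dA x l a b + 1 * dB x l a b) a b e = 0"
      unfolding jexpr_def using pdAB[OF x] by simp
    from jexpr_pencil[OF jA jB jAB, of c]
    show ?thesis unfolding jexpr_def P_def dP_def by simp
  qed
  have pm: "(\<chi> i j. A y $ i $ j - c * B y $ i $ j) = P y" for y
    by (simp add: P_def vec_eq_iff)
  have eig0: "rank (P x0) < pencil_rank (A x0) (B x0)"
    using eig[OF x0] unfolding pencil_eigenvalue_def c_def[symmetric] pm .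
  obtain e where e: "e > 0" "\<And>x. dist x x0 < e \<Longrightarrow> (x, c) \<in> U"
  proof -
    obtain e where "e > 0" "ball (x0, c) e \<subseteq> U"
      using U Ug[OF x0] open_contains_ball unfolding c_def by blast
    moreover have "dist (x, c) (x0, c) = dist x x0" for x
      by (simp add: dist_Pair_Pair)
    ultimately show ?thesis using that by (metis mem_ball dist_commute subsetD)
  qed
  have ld: "(lam has_derivative (\<lambda>v. \<Sum>l\<in>UNIV. v $ l * pd lam x0 l)) (at x0)"
    by (rule holo_partials(1)[OF M sml x0])
  have col: "(\<Sum>l\<in>UNIV. P x0 $ l $ j * pd lam x0 l) = 0" for j
  proof -
    obtain h \<gamma> where h: "h > 0" and g0: "\<gamma> 0 = x0"
      and Mgc: "continuous_on {0..h} (\<lambda>t. \<chi> a l. dP (\<gamma> t) l a j)"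
      and gM: "\<And>t. t \<in> {0..h} \<Longrightarrow> \<gamma> t \<in> M"
      and gD: "\<And>t. t \<in> {0..h} \<Longrightarrow> (\<gamma> has_vector_derivative (\<chi> a. P (\<gamma> t) $ a $ j)) (at t within {0..h})"
      and PD: "\<And>t. t \<in> {0..h} \<Longrightarrow> ((\<lambda>t. P (\<gamma> t)) has_vector_derivative
          ((\<chi> a l. dP (\<gamma> t) l a j) ** P (\<gamma> t) + P (\<gamma> t) ** transpose (\<chi> a l. dP (\<gamma> t) l a j)))
          (at t within {0..h})"
      using flow_lemma[OF M x0 Pd dPc Pskew jac, of j] by blast
    define Mc where "Mc = (\<lambda>t. (\<chi> a l. dP (\<gamma> t) l a j))"
    define Pc where "Pc = (\<lambda>t. P (\<gamma> t))"
    have Mcc: "continuous_on {0..h} Mc" unfolding Mc_def by (rule Mgc)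
    have Pcd: "(Pc has_vector_derivative (Mc t ** Pc t + Pc t ** transpose (Mc t))) (at t within {0..h})"
      if t: "t \<in> {0..h}" for t
      using PD[OF t] unfolding Pc_def Mc_def .
    obtain h2 where h2: "h2 > 0" and rk2: "\<And>t. t \<in> {0..h2} \<Longrightarrow> rank (Pc t) \<le> rank (Pc 0)"
      using rank_nonincreasing[OF h Mcc Pcd] by blast
    have "continuous (at 0 within {0..h}) \<gamma>"
      using gD[of 0] h by (auto intro: has_vector_derivative_continuous)
    then obtain d where d: "d > 0" "\<And>t. t \<in> {0..h} \<Longrightarrow> dist t 0 < d \<Longrightarrow> dist (\<gamma> t) (\<gamma> 0) < e"
      using e(1) unfolding continuous_within_eps_delta by blast
    define h4 where "h4 = min h (min h2 (d/2))"
    have h4: "h4 > 0" "h4 \<le> h" unfolding h4_def using h h2 d by auto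
    have const: "lam (\<gamma> t) = lam (\<gamma> 0)" if t: "t \<in> {0..h4}" for t
    proof (rule ccontr)
      assume ne: "lam (\<gamma> t) \<noteq> lam (\<gamma> 0)"
      have th: "t \<in> {0..h}" and th2: "t \<in> {0..h2}" and td: "dist t 0 < d"
        using t d unfolding h4_def by auto
      have gtM: "\<gamma> t \<in> M" by (rule gM[OF th])
      have "rank (P (\<gamma> t)) \<le> rank (P x0)" using rk2[OF th2] g0 unfolding Pc_def by simp
      also have "\<dots> < pencil_rank (A x0) (B x0)" by (rule eig0)
      also have "\<dots> = pencil_rank (A (\<gamma> t)) (B (\<gamma> t))" by (rule rk[OF x0 gtM])
      finally have "pencil_eigenvalue (A (\<gamma> t)) (B (\<gamma> t)) c"
        unfolding pencil_eigenvalue_def pm .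
      moreover have "(\<gamma> t, c) \<in> U" using e(2) d(2)[OF th td] g0 by simp
      moreover have "c \<noteq> lam (\<gamma> t)"
        using ne g0 unfolding c_def by simp
      ultimately show False using iso[OF gtM] by blast
    qed
    have gD0: "(\<gamma> has_vector_derivative (\<chi> a. P (\<gamma> 0) $ a $ j)) (at 0 within {0..h4})"
      by (rule has_vector_derivative_within_subset[OF gD]) (use h4 in auto)
    have ld': "(lam has_derivative (\<lambda>v. \<Sum>l\<in>UNIV. v $ l * pd lam x0 l)) (at (\<gamma> 0))"
      using ld g0 by simp
    from deriv_const_zero[OF h4(1) gD0 ld' const]
    show ?thesis using g0 by simp
  qed
  have "(\<chi> i. \<Sum>j\<in>UNIV. P x0 $ i $ j * pd lam x0 j) = 0"
    by (rule final_conv[OF Pskew[OF x0] col])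
  then show ?thesis unfolding P_def c_def by simp
qed



theorem mainTheorem5:
  shows
  "(\<forall>(M :: (real^'n) set) (A :: real^'n \<Rightarrow> real^'n^'n) B (lam :: real^'n \<Rightarrow> real).
      open M \<and>
      (\<forall>i j. smooth_on M (\<lambda>x. A x $ i $ j) \<and> smooth_on M (\<lambda>x. B x $ i $ j)) \<and>
      poisson_pencil_on M A B \<and>
      smooth_on M lam \<and>
      (\<forall>x\<in>M. pencil_eigenvalue (cplx (A x)) (cplx (B x)) (complex_of_real (lam x))) \<and>
      (\<forall>x\<in>M. \<forall>y\<in>M. pencil_rank (cplx (A x)) (cplx (B x)) = pencil_rank (cplx (A y)) (cplx (B y))) \<and>
      (\<exists>U :: ((real^'n) \<times> complex) set. open U \<and>
          (\<forall>x\<in>M. (x, complex_of_real (lam x)) \<in> U) \<and>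
          (\<forall>x\<in>M. \<forall>\<mu>. (x, \<mu>) \<in> U \<and> \<mu> \<noteq> complex_of_real (lam x) \<longrightarrow>
                       \<not> pencil_eigenvalue (cplx (A x)) (cplx (B x)) \<mu>))
      \<longrightarrow> (\<forall>x\<in>M. (\<chi> i. \<Sum>j\<in>UNIV. (A x $ i $ j - lam x * B x $ i $ j) * pd lam x j) = 0))
   \<and>
   (\<forall>(M :: (complex^'n) set) (A :: complex^'n \<Rightarrow> complex^'n^'n) B (lam :: complex^'n \<Rightarrow> complex).
      open M \<and>
      (\<forall>i j. holo_on M (\<lambda>x. A x $ i $ j) \<and> holo_on M (\<lambda>x. B x $ i $ j)) \<and>
      poisson_pencil_on M A B \<and>
      holo_on M lam \<and>
      (\<forall>x\<in>M. pencil_eigenvalue (A x) (B x) (lam x)) \<and>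
      (\<forall>x\<in>M. \<forall>y\<in>M. pencil_rank (A x) (B x) = pencil_rank (A y) (B y)) \<and>
      (\<exists>U :: ((complex^'n) \<times> complex) set. open U \<and>
          (\<forall>x\<in>M. (x, lam x) \<in> U) \<and>
          (\<forall>x\<in>M. \<forall>\<mu>. (x, \<mu>) \<in> U \<and> \<mu> \<noteq> lam x \<longrightarrow> \<not> pencil_eigenvalue (A x) (B x) \<mu>))
      \<longrightarrow> (\<forall>x\<in>M. (\<chi> i. \<Sum>j\<in>UNIV. (A x $ i $ j - lam x * B x $ i $ j) * pd lam x j) = 0))"
  apply (intro conjI allI impI ballI)
   apply (elim conjE exE)
  subgoal premises p for M A B lam x U
    apply (rule real_case[where U=U and M=M and A=A and B=B and lam=lam])
    using p by blast+
  apply (elim conjE exE)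
  subgoal premises p for M A B lam x U
    apply (rule complex_case[where U=U and M=M and A=A and B=B and lam=lam])
    using p by blast+
  done

end
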